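(* Let $\alpha_{\mathsf{snr},n_t}:=\int_0^{\sqrt{\mathsf{snr}}}\zeta_0(r)^{\frac{n_t-1}{2}}\zeta_2(r)^{\frac12}n_t r^{n_t-1}dr$. Then: (i) In the regime $n_t\,\mathsf{snr}\to0$, $\alpha_{\mathsf{snr},n_t}\sim\left(\frac2\pi\mathsf{snr}\right)^{n_t/2}$. (ii) In the regime $\mathsf{snr}/n_t\to\infty$, $$\alpha_{\mathsf{snr},n_t}\sim\begin{cases}\int_0^\infty\sqrt{\zeta_2(r)}\,dr,& n_t=1,\\ A_0^{\frac{n_t-1}{2}}A_2^{\frac12}\ln\mathsf{snr},& n_t=2,\\ \frac{2n_t}{n_t-2}A_0^{\frac{n_t-1}{2}}A_2^{\frac12}\,\mathsf{snr}^{\frac{n_t-2}{4}},& n_t\ge3.\end{cases}$$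
   Context: $\phi(t)=\frac{1}{\sqrt{2\pi}}e^{-t^2/2}$, $Q(x)=\int_x^\infty\phi(t)dt$, $\xi(s):=\frac{\phi^2(s)}{Q(s)(1-Q(s))}$, $\zeta_k(t):=\mathbb{E}[S^k\xi(tS)]$ for $S\sim\mathcal{N}(0,1)$, $k\in\mathbb{Z}$. $A_0:=\frac{1}{\sqrt{2\pi}}\int_{-\infty}^{\infty}\xi(u)du$ and $A_2:=\frac{1}{\sqrt{2\pi}}\int_{-\infty}^{\infty}\xi(u)u^2du$. $a\sim b$ means $a/b\to1$ in the indicated limit. *)

theory Defs
  imports "HOL-Analysis.Analysis"
begin

definition phi :: "real \<Rightarrow> real" where
  "phi t = exp (- (t^2) / 2) / sqrt (2 * pi)"

definition Qf :: "real \<Rightarrow> real" where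
  "Qf x = (LBINT t:{x..}. phi t)"

definition xi :: "real \<Rightarrow> real" where
  "xi s = (phi s)^2 / (Qf s * (1 - Qf s))"

definition zeta :: "int \<Rightarrow> real \<Rightarrow> real" where
  "zeta k t = (\<integral>s. (s powi k) * xi (t * s) * phi s \<partial>lborel)"

definition A0 :: real where
  "A0 = (1 / sqrt (2 * pi)) * (\<integral>u. xi u \<partial>lborel)"

definition A2 :: real where
  "A2 = (1 / sqrt (2 * pi)) * (\<integral>u. xi u * u^2 \<partial>lborel)"

definition alpha :: "real \<Rightarrow> nat \<Rightarrow> real" where
  "alpha snr nt = (LBINT r=0..sqrt snr.
      zeta 0 r powr ((real nt - 1) / 2) * sqrt (zeta 2 r) * real nt * r ^ (nt - 1))"

end

theory Submission
  imports Defs "HOL-Probability.Probability"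
begin

lemma phi_eq: "phi = std_normal_density"
  by (rule ext) (simp add: phi_def std_normal_density_def)

lemma phi_pos: "phi x > 0" by (simp add: phi_def)
lemma phi_even: "phi (-x) = phi x" by (simp add: phi_def)
lemma phi_le: "phi x \<le> 1 / sqrt (2*pi)" by (simp add: phi_def divide_right_mono)
lemma phi_meas[measurable]: "phi \<in> borel_measurable borel" unfolding phi_eq by simp
lemma phi_int: "integrable lborel phi" unfolding phi_eq by simp
lemma phi_integral: "(\<integral>x. phi x \<partial>lborel) = 1" unfolding phi_eq by simp

lemma Qf_ind: "Qf x = (\<integral>t. indicator {x..} t * phi t \<partial>lborel)"
  unfolding Qf_def set_lebesgue_integral_def by simp

lemma meas_param:
  fixes f :: "real \<Rightarrow> real \<Rightarrow> real"
  assumes "(\<lambda>p. f (fst p) (snd p)) \<in> borel_measurable (borel \<Otimes>\<^sub>M borel)"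
  shows "(\<lambda>x. \<integral>y. f x y \<partial>lborel) \<in> borel_measurable (borel :: real measure)"
proof -
  have "(\<lambda>p. f (fst p) (snd p)) \<in> borel_measurable ((borel::real measure) \<Otimes>\<^sub>M lborel)"
    using assms by (subst measurable_cong_sets[OF sets_pair_measure_cong[OF refl sets_lborel] refl])
  then show ?thesis
    using lborel.borel_measurable_lebesgue_integral[of "\<lambda>x y. f x y" borel] by (simp add: case_prod_beta')
qed

lemma Qf_meas[measurable]: "Qf \<in> borel_measurable borel"
proof -
  have "(\<lambda>p::real\<times>real. of_bool (fst p \<le> snd p) * phi (snd p)) \<in> borel_measurable (borel \<Otimes>\<^sub>M borel)"
    by measurable
  then have "(\<lambda>x. \<integral>y. of_bool (x \<le> y) * phi y \<partial>lborel) \<in> borel_measurable borel"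
    by (rule meas_param)
  moreover have "Qf = (\<lambda>x. \<integral>y. of_bool (x \<le> y) * phi y \<partial>lborel)"
    by (rule ext) (simp add: Qf_ind indicator_def)
  ultimately show ?thesis by simp
qed

definition cc :: real where "cc = 1 / sqrt (2*pi)"

lemma cc_pos: "cc > 0" by (simp add: cc_def)
lemma phi_cc: "phi x = cc * exp (- (x^2)/2)" by (simp add: phi_def cc_def)
lemma phi_le_cc: "phi x \<le> cc" using phi_le by (simp add: cc_def)
lemma phi_0: "phi 0 = cc" by (simp add: phi_cc)
lemma cc_sq: "cc^2 = 1/(2*pi)" by (simp add: cc_def power_divide)

lemma int_ind_phi: "A \<in> sets borel \<Longrightarrow> integrable lborel (\<lambda>t. indicator A t * phi t)"
  using integrable_real_mult_indicator[of A lborel phi] phi_int by (simp add: mult.commute)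

lemma Q_diff: assumes "x \<le> y" shows "Qf x - Qf y = (\<integral>t. indicator {x..<y} t * phi t \<partial>lborel)"
proof -
  have "(\<lambda>t. indicator {x..} t * phi t) = (\<lambda>t. indicator {x..<y} t * phi t + indicator {y..} t * phi t)"
    using assms by (auto simp: indicator_def fun_eq_iff)
  then have "Qf x = (\<integral>t. indicator {x..<y} t * phi t \<partial>lborel) + Qf y"
    unfolding Qf_ind by (simp add: Bochner_Integration.integral_add int_ind_phi)
  then show ?thesis by simp
qed

lemma Q_compl: "1 - Qf x = (\<integral>t. indicator {..<x} t * phi t \<partial>lborel)"
proof -
  have "phi = (\<lambda>t. indicator {..<x} t * phi t + indicator {x..} t * phi t)"
    by (auto simp: indicator_def fun_eq_iff)
  then have "1 = (\<integral>t. indicator {..<x} t * phi t \<partial>lborel) + Qf x"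
  proof -
    have "1 = (\<integral>t. indicator {..<x} t * phi t + indicator {x..} t * phi t \<partial>lborel)"
      using phi_integral by (subst (asm) \<open>phi = _\<close>) (erule sym)
    also have "\<dots> = (\<integral>t. indicator {..<x} t * phi t \<partial>lborel) + Qf x"
      unfolding Qf_ind by (simp add: Bochner_Integration.integral_add int_ind_phi)
    finally show ?thesis .
  qed
  then show ?thesis by simp
qed

lemma Q_neg: "Qf (-x) = 1 - Qf x"
proof -
  have "Qf (-x) = (\<integral>t. indicator {-x..} (-t) * phi (-t) \<partial>lborel)"
    unfolding Qf_ind using lborel_integral_real_affine[of "-1" "\<lambda>t. indicator {-x..} t * phi t" 0]
    by simp
  also have "\<dots> = (\<integral>t. indicator {..<x} t * phi t \<partial>lborel)"
  proof (rule integral_cong_AE)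
    show "AE t in lborel. indicator {-x..} (-t) * phi (-t) = indicator {..<x} t * phi t"
      using AE_lborel_singleton[of x] by eventually_elim (auto simp: indicator_def phi_even)
  qed auto
  finally show ?thesis using Q_compl by simp
qed

lemma Q_half: "Qf 0 = 1/2" using Q_neg[of 0] by simp

lemma Q_nonneg: "Qf x \<ge> 0"
  unfolding Qf_ind by (rule integral_nonneg_AE) (auto simp: indicator_def intro: less_imp_le[OF phi_pos])

lemma Q_diff_bounds: assumes "x \<le> y" shows "0 \<le> Qf x - Qf y" "Qf x - Qf y \<le> cc * (y - x)"
proof -
  show "0 \<le> Qf x - Qf y" unfolding Q_diff[OF assms]
    by (rule integral_nonneg_AE) (auto simp: indicator_def intro: less_imp_le[OF phi_pos])
  have "(\<integral>t. indicator {x..<y} t * phi t \<partial>lborel) \<le> (\<integral>t. cc * indicator {x..<y} t \<partial>lborel)"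
    apply (rule integral_mono[OF int_ind_phi])
    apply simp
    apply (intro integrable_mult_right integrable_real_indicator)
    apply simp
    apply (simp add: assms emeasure_lborel_Ico)
    apply (auto simp: indicator_def phi_le_cc)
    done
  also have "\<dots> = cc * (y - x)" using assms by simp
  finally show "Qf x - Qf y \<le> cc * (y - x)" using Q_diff[OF assms] by simp
qed

lemma Q_mid: "\<bar>Qf x - 1/2\<bar> \<le> cc * \<bar>x\<bar>"
proof (cases "x \<ge> 0")
  case True then show ?thesis using Q_diff_bounds[of 0 x] Q_half by auto
next
  case False then show ?thesis using Q_diff_bounds[of x 0] Q_half by auto
qed

lemma Q_lower: assumes "x \<ge> 0" shows "Qf x \<ge> phi (x+1)"
proof -
  have "phi (x+1) = (\<integral>t. phi (x+1) * indicator {x..<x+1} t \<partial>lborel)" by simp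
  also have "\<dots> \<le> (\<integral>t. indicator {x..<x+1} t * phi t \<partial>lborel)"
  proof (rule integral_mono)
    fix t show "phi (x+1) * indicator {x..<x+1} t \<le> indicator {x..<x+1} t * phi t"
    proof (cases "t \<in> {x..<x+1}")
      case True
      then have "t^2 \<le> (x+1)^2" using assms by (intro power_mono) auto
      then show ?thesis using True by (simp add: phi_cc cc_pos)
    qed simp
  qed (auto simp: int_ind_phi)
  also have "\<dots> = Qf x - Qf (x+1)" using Q_diff[of x "x+1"] by simp
  also have "\<dots> \<le> Qf x" using Q_nonneg[of "x+1"] by simp
  finally show ?thesis .
qed

lemma Q_pos: "Qf x > 0"
proof (cases "x \<ge> 0")
  case True then show ?thesis using Q_lower[OF True] phi_pos[of "x+1"] by linarith
next
  case False then show ?thesis using Q_diff_bounds(1)[of x 0] Q_half by simp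
qed

lemma Q_lt1: "Qf x < 1" using Q_pos[of "-x"] Q_neg[of x] by simp

definition DD :: "real \<Rightarrow> real" where "DD x = Qf x * (1 - Qf x)"

lemma xi_DD: "xi x = phi x ^ 2 / DD x" by (simp add: xi_def DD_def)
lemma DD_pos: "DD x > 0" using Q_pos[of x] Q_lt1[of x] by (simp add: DD_def)
lemma DD_le: "DD x \<le> 1/4"
proof -
  have "DD x = 1/4 - (Qf x - 1/2)^2" by (simp add: DD_def power2_eq_square algebra_simps)
  then show ?thesis by simp
qed
lemma DD_ge: "DD x \<ge> 1/4 - cc^2 * x^2"
proof -
  have "DD x = 1/4 - (Qf x - 1/2)^2" by (simp add: DD_def power2_eq_square algebra_simps)
  moreover have "(Qf x - 1/2)^2 \<le> (cc * \<bar>x\<bar>)^2"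
    using Q_mid[of x] by (metis abs_ge_zero power2_abs power_mono)
  ultimately show ?thesis by (simp add: power_mult_distrib)
qed
lemma DD_even: "DD (-x) = DD x" by (simp add: DD_def Q_neg)
lemma xi_even: "xi (-x) = xi x" by (simp add: xi_DD DD_even phi_even)
lemma xi_pos: "xi x > 0" using DD_pos[of x] phi_pos[of x] by (simp add: xi_DD)
lemma xi_meas[measurable]: "xi \<in> borel_measurable borel" unfolding xi_def by measurable

lemma phi_sq: "phi x ^ 2 = cc^2 * exp (- (x^2))"
  by (simp add: phi_cc power_mult_distrib exp_double[symmetric] power2_eq_square[of "exp _"] mult_exp_exp)

lemma xi_ge4: "xi x \<ge> 4 * phi x ^ 2"
proof -
  have "phi x ^ 2 / (1/4) \<le> phi x ^ 2 / DD x"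
    using DD_pos[of x] DD_le[of x] by (intro divide_left_mono) auto
  then show ?thesis by (simp add: xi_DD)
qed

lemma xi_lower: "xi x \<ge> 4 * cc^2 * (1 - (x^2))"
proof -
  have "1 - (x^2) \<le> exp (- (x^2))" using exp_ge_add_one_self[of "-(x^2)"] by simp
  then have "4 * cc^2 * (1 - (x^2)) \<le> 4 * cc^2 * exp (-(x^2))" by (intro mult_left_mono) auto
  then show ?thesis using xi_ge4[of x] by (simp add: phi_sq)
qed

definition Cx :: real where "Cx = 2 * cc * exp (3/2)"

lemma Cx_pos: "Cx > 0" by (simp add: Cx_def cc_pos)

lemma xi_gauss_pos: assumes "x \<ge> 0" shows "xi x \<le> Cx * exp (- (x^2) / 4)"
proof -
  have Qh: "Qf x \<le> 1/2" using Q_diff_bounds(1)[of 0 x] Q_half assms by simp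
  have "DD x \<ge> phi (x+1) / 2"
  proof -
    have "phi (x+1) / 2 \<le> Qf x * (1/2)" using Q_lower[OF assms] by simp
    also have "\<dots> \<le> Qf x * (1 - Qf x)" using Qh Q_pos[of x] by (intro mult_left_mono) auto
    finally show ?thesis by (simp add: DD_def)
  qed
  then have "xi x \<le> phi x ^ 2 / (phi (x+1) / 2)"
    unfolding xi_DD using phi_pos[of "x+1"] phi_pos[of x]
    by (intro divide_left_mono) auto
  also have "\<dots> = 2 * cc * exp (- (x^2) + (x+1)^2/2)"
  proof -
    have a: "-(x^2) - (-((x+1)^2)/2) = -(x^2) + (x+1)^2/2" by simp
    have e: "exp (-(x^2)) / exp (-((x+1)^2)/2) = exp (-(x^2) + (x+1)^2/2)"
      unfolding a[symmetric] exp_diff ..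
    have "phi x ^ 2 / (phi (x+1) / 2) = 2 * cc * (exp (-(x^2)) / exp (-((x+1)^2)/2))"
      using cc_pos by (simp add: phi_sq phi_cc power2_eq_square field_simps mult_exp_exp)
    also have "\<dots> = 2 * cc * exp (- (x^2) + (x+1)^2/2)" by (simp only: e)
    finally show ?thesis .
  qed
  also have "\<dots> \<le> 2 * cc * exp (3/2 - (x^2)/4)"
  proof -
    have "- (x^2) + (x+1)^2/2 \<le> 3/2 - (x^2)/4"
    proof -
      have "0 \<le> (x/2 - 1)^2" by simp
      then show ?thesis by (simp add: power2_eq_square algebra_simps)
    qed
    then show ?thesis using cc_pos by simp
  qed
  also have "\<dots> = Cx * exp (- (x^2) / 4)"
  proof -
    have "exp (3/2 - x^2/4) = exp (3/2) * exp (- (x^2) / 4)" by (subst exp_add[symmetric]) simp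
    then show ?thesis by (simp add: Cx_def)
  qed
  finally show ?thesis .
qed

lemma xi_gauss: "xi x \<le> Cx * exp (- (x^2) / 4)"
proof (cases "x \<ge> 0")
  case True then show ?thesis by (rule xi_gauss_pos)
next
  case False then show ?thesis using xi_gauss_pos[of "-x"] by (simp add: xi_even)
qed

lemma xi_bound: "xi x \<le> Cx"
proof -
  have "exp (- (x^2)/4) \<le> 1" by simp
  then show ?thesis using xi_gauss[of x] Cx_pos by (smt (verit) mult_left_mono mult_cancel_left1)
qed

definition Kx :: real where "Kx = 4 * cc^2 + 32 * cc^4 + 8 * cc^2 * Cx"

lemma xi_quad: "\<bar>xi x - 4 * cc^2\<bar> \<le> Kx * x^2"
proof -
  have lo: "xi x - 4 * cc^2 \<ge> - (4 * cc^2) * x^2" using xi_lower[of x] by (simp add: algebra_simps)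
  have hi: "xi x - 4 * cc^2 \<le> (32 * cc^4 + 8 * cc^2 * Cx) * x^2"
  proof (cases "cc^2 * x^2 \<le> 1/8")
    case True
    let ?y = "cc^2 * x^2"
    have y0: "?y \<ge> 0" by simp
    have Dp: "1/4 - ?y > 0" using True by simp
    have "xi x \<le> cc^2 / (1/4 - ?y)"
    proof -
      have "xi x = cc^2 * exp (-(x^2)) / DD x" by (simp add: xi_DD phi_sq)
      also have "\<dots> \<le> cc^2 / DD x" using DD_pos[of x]
        by (intro divide_right_mono mult_left_le) auto
      also have "\<dots> \<le> cc^2 / (1/4 - ?y)" using DD_ge[of x] Dp by (intro divide_left_mono) auto
      finally show ?thesis .
    qed
    also have "\<dots> \<le> 4 * cc^2 + 32 * cc^4 * x^2"
    proof -
      have "cc^2 \<le> (4 * cc^2 + 32 * cc^4 * x^2) * (1/4 - ?y)"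
      proof -
        have "(4 * cc^2 + 32 * cc^4 * x^2) * (1/4 - ?y) - cc^2 = ?y * (4 * cc^2) * (1 - 8 * ?y)"
          by (simp add: algebra_simps power2_eq_square power4_eq_xxxx)
        moreover have "?y * (4 * cc^2) * (1 - 8 * ?y) \<ge> 0" using True y0 by simp
        ultimately show ?thesis by linarith
      qed
      then show ?thesis using Dp by (simp add: divide_le_eq)
    qed
    finally have "xi x - 4 * cc^2 \<le> 32 * cc^4 * x^2" by simp
    moreover have "0 \<le> 8 * cc^2 * Cx * x^2" using Cx_pos by simp
    ultimately show ?thesis by (simp add: algebra_simps)
  next
    case False
    then have "1 \<le> 8 * cc^2 * x^2" by simp
    then have "Cx \<le> 8 * cc^2 * Cx * x^2" using Cx_pos by (smt (verit) mult_le_cancel_left1 mult.commute mult.assoc)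
    moreover have "0 \<le> 32 * cc^4 * x^2" by simp
    moreover have "0 \<le> 4 * cc^2" by simp
    moreover have "(32 * cc^4 + 8 * cc^2 * Cx) * x^2 = 32 * cc^4 * x^2 + 8 * cc^2 * Cx * x^2"
      by (simp add: algebra_simps)
    ultimately show ?thesis using xi_bound[of x] by linarith
  qed
  have K: "Kx * x^2 = 4*cc^2*x^2 + (32*cc^4 + 8*cc^2*Cx)*x^2" by (simp add: Kx_def algebra_simps)
  have "0 \<le> 4*cc^2*x^2" "0 \<le> (32*cc^4 + 8*cc^2*Cx)*x^2" using Cx_pos by simp_all
  then show ?thesis using lo hi K by (simp only: abs_le_iff) linarith
qed

lemma exp_quarter: "exp (- (x^2)/4) = sqrt (4*pi) * normal_density 0 (sqrt 2) x"
  by (simp add: normal_density_def real_sqrt_mult)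

lemma xi_integrable_abs: "integrable lborel (\<lambda>x. xi x * \<bar>x\<bar>^k)"
proof (rule Bochner_Integration.integrable_bound)
  show "integrable lborel (\<lambda>x. Cx * sqrt (4*pi) * (normal_density 0 (sqrt 2) x * \<bar>x - 0\<bar>^k))"
    by (intro integrable_mult_right integrable_normal_moment_abs) auto
  show "AE x in lborel. norm (xi x * \<bar>x\<bar>^k) \<le> norm (Cx * sqrt (4*pi) * (normal_density 0 (sqrt 2) x * \<bar>x - 0\<bar>^k))"
  proof (rule AE_I2)
    fix x
    have "xi x * \<bar>x\<bar>^k \<le> (Cx * exp (- (x^2)/4)) * \<bar>x\<bar>^k" using xi_gauss[of x] by (intro mult_right_mono) auto
    moreover have eq: "Cx * sqrt (4*pi) * (normal_density 0 (sqrt 2) x * \<bar>x - 0\<bar>^k) = (Cx * exp (- (x^2)/4)) * \<bar>x\<bar>^k"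
      by (simp only: exp_quarter) (simp add: mult_ac)
    ultimately show "norm (xi x * \<bar>x\<bar>^k) \<le> norm (Cx * sqrt (4*pi) * (normal_density 0 (sqrt 2) x * \<bar>x - 0\<bar>^k))"
      unfolding eq using xi_pos[of x] Cx_pos by (simp add: abs_mult)
  qed
qed measurable

lemma xi_integrable: "integrable lborel (\<lambda>x. xi x * x^k)"
  using xi_integrable_abs[of k] by (rule Bochner_Integration.integrable_bound) (auto simp: abs_mult power_abs)

lemma zeta0_eq: "zeta 0 r = (\<integral>s. xi (r * s) * phi s \<partial>lborel)" by (simp add: zeta_def)
lemma zeta2_eq: "zeta 2 r = (\<integral>s. s^2 * xi (r * s) * phi s \<partial>lborel)" by (simp add: zeta_def)

lemma mom_int: "integrable lborel (\<lambda>s. \<bar>s\<bar>^k * phi s)"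
  using integrable_std_normal_moment_abs[of k] by (simp add: phi_eq mult.commute)
lemma mom_int': "integrable lborel (\<lambda>s. s^k * phi s)"
  using integrable_std_normal_moment[of k] by (simp add: phi_eq mult.commute)
lemma mom2: "(\<integral>s. s^2 * phi s \<partial>lborel) = 1"
  using integral_std_normal_moment_even[of 1] by (simp add: phi_eq mult.commute)
lemma mom4: "(\<integral>s. s^4 * phi s \<partial>lborel) = 3"
  using integral_std_normal_moment_even[of 2] by (simp add: phi_eq mult.commute fact_numeral)

lemma zk_int: "integrable lborel (\<lambda>s. s^k * xi (r * s) * phi s)"
proof (rule Bochner_Integration.integrable_bound)
  show "integrable lborel (\<lambda>s. Cx * (\<bar>s\<bar>^k * phi s))" by (intro integrable_mult_right mom_int)
  show "AE s in lborel. norm (s^k * xi (r * s) * phi s) \<le> norm (Cx * (\<bar>s\<bar>^k * phi s))"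
  proof (rule AE_I2)
    fix s
    have "\<bar>s\<bar>^k * xi (r * s) * phi s \<le> \<bar>s\<bar>^k * Cx * phi s"
      using xi_bound[of "r * s"] phi_pos[of s] by (intro mult_right_mono mult_left_mono) auto
    then show "norm (s^k * xi (r * s) * phi s) \<le> norm (Cx * (\<bar>s\<bar>^k * phi s))"
      using xi_pos[of "r * s"] phi_pos[of s] Cx_pos by (simp add: abs_mult power_abs mult_ac)
  qed
qed measurable

lemma z0_int: "integrable lborel (\<lambda>s. xi (r * s) * phi s)" using zk_int[of 0 r] by simp

lemma zeta0_meas[measurable]: "zeta 0 \<in> borel_measurable borel"
proof -
  have "(\<lambda>p::real\<times>real. xi (fst p * snd p) * phi (snd p)) \<in> borel_measurable (borel \<Otimes>\<^sub>M borel)"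
    by measurable
  then have "(\<lambda>x. \<integral>y. xi (x*y) * phi y \<partial>lborel) \<in> borel_measurable borel" by (rule meas_param)
  moreover have "zeta 0 = (\<lambda>x. \<integral>y. xi (x*y) * phi y \<partial>lborel)" by (rule ext) (simp add: zeta0_eq)
  ultimately show ?thesis by simp
qed

lemma zeta2_meas[measurable]: "zeta 2 \<in> borel_measurable borel"
proof -
  have "(\<lambda>p::real\<times>real. (snd p)^2 * xi (fst p * snd p) * phi (snd p)) \<in> borel_measurable (borel \<Otimes>\<^sub>M borel)"
    by measurable
  then have "(\<lambda>x. \<integral>y. y^2 * xi (x*y) * phi y \<partial>lborel) \<in> borel_measurable borel" by (rule meas_param)
  moreover have "zeta 2 = (\<lambda>x. \<integral>y. y^2 * xi (x*y) * phi y \<partial>lborel)" by (rule ext) (simp add: zeta2_eq)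
  ultimately show ?thesis by simp
qed

lemma zeta0_nonneg: "zeta 0 r \<ge> 0"
  unfolding zeta0_eq by (rule integral_nonneg_AE) (auto intro!: mult_nonneg_nonneg less_imp_le[OF xi_pos] less_imp_le[OF phi_pos])
lemma zeta2_nonneg: "zeta 2 r \<ge> 0"
  unfolding zeta2_eq by (rule integral_nonneg_AE) (auto intro!: mult_nonneg_nonneg less_imp_le[OF xi_pos] less_imp_le[OF phi_pos])

lemma zeta0_le: "zeta 0 r \<le> Cx"
proof -
  have "zeta 0 r \<le> (\<integral>s. Cx * phi s \<partial>lborel)" unfolding zeta0_eq
    by (rule integral_mono[OF z0_int]) (auto intro: integrable_mult_right phi_int mult_right_mono xi_bound less_imp_le[OF phi_pos])
  then show ?thesis by (simp add: phi_integral)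
qed

lemma zeta2_le: "zeta 2 r \<le> Cx"
proof -
  have "zeta 2 r \<le> (\<integral>s. Cx * (s^2 * phi s) \<partial>lborel)" unfolding zeta2_eq
  proof (rule integral_mono[OF zk_int])
    show "integrable lborel (\<lambda>s. Cx * (s^2 * phi s))" by (intro integrable_mult_right mom_int')
    fix s show "s^2 * xi (r * s) * phi s \<le> Cx * (s^2 * phi s)"
      using xi_bound[of "r * s"] phi_pos[of s] by (simp add: mult_right_mono mult_left_mono mult_ac)
  qed
  then show ?thesis by (simp add: mom2)
qed

lemma zeta0_small: "\<bar>zeta 0 r - 4*cc^2\<bar> \<le> Kx * r^2"
proof -
  have "zeta 0 r - 4*cc^2 = (\<integral>s. (xi (r * s) - 4*cc^2) * phi s \<partial>lborel)"
    unfolding zeta0_eq using z0_int[of r] phi_int phi_integral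
    by (simp add: left_diff_distrib Bochner_Integration.integral_diff)
  also have "\<bar>\<dots>\<bar> \<le> (\<integral>s. \<bar>(xi (r * s) - 4*cc^2) * phi s\<bar> \<partial>lborel)"
    by (rule integral_abs_bound)
  also have "\<dots> \<le> (\<integral>s. Kx * r^2 * (s^2 * phi s) \<partial>lborel)"
  proof (rule integral_mono)
    show "integrable lborel (\<lambda>s. \<bar>(xi (r * s) - 4*cc^2) * phi s\<bar>)"
      using z0_int[of r] phi_int by (intro integrable_abs Bochner_Integration.integrable_diff) (simp_all add: left_diff_distrib)
    show "integrable lborel (\<lambda>s. Kx * r^2 * (s^2 * phi s))" by (intro integrable_mult_right mom_int')
    fix s show "\<bar>(xi (r * s) - 4*cc^2) * phi s\<bar> \<le> Kx * r^2 * (s^2 * phi s)"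
      using xi_quad[of "r * s"] phi_pos[of s] by (simp add: abs_mult mult_right_mono power_mult_distrib mult_ac)
  qed
  also have "\<dots> = Kx * r^2" by (simp add: mom2)
  finally show ?thesis .
qed

lemma zeta2_small: "\<bar>zeta 2 r - 4*cc^2\<bar> \<le> 3 * Kx * r^2"
proof -
  have eq: "(\<lambda>s. (xi (r * s) - 4*cc^2) * (s^2 * phi s)) = (\<lambda>s. s^2 * xi (r * s) * phi s - 4*cc^2 * (s^2 * phi s))"
    by (rule ext) (simp add: algebra_simps)
  have "zeta 2 r - 4*cc^2 = (\<integral>s. (xi (r * s) - 4*cc^2) * (s^2 * phi s) \<partial>lborel)"
  proof -
    have "(\<lambda>s. (xi (r * s) - 4*cc^2) * (s^2 * phi s)) = (\<lambda>s. s^2 * xi (r * s) * phi s - 4*cc^2 * (s^2 * phi s))"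
      by (rule ext) (simp add: algebra_simps)
    then show ?thesis unfolding zeta2_eq using zk_int[of 2 r] mom_int'[of 2] mom2
      by (simp add: Bochner_Integration.integral_diff)
  qed
  also have "\<bar>\<dots>\<bar> \<le> (\<integral>s. \<bar>(xi (r * s) - 4*cc^2) * (s^2 * phi s)\<bar> \<partial>lborel)"
    by (rule integral_abs_bound)
  also have "\<dots> \<le> (\<integral>s. Kx * r^2 * (s^4 * phi s) \<partial>lborel)"
  proof (rule integral_mono)
    show "integrable lborel (\<lambda>s. \<bar>(xi (r * s) - 4*cc^2) * (s^2 * phi s)\<bar>)"
      apply (rule integrable_abs) apply (subst eq)
      by (intro Bochner_Integration.integrable_diff zk_int integrable_mult_right mom_int')
    show "integrable lborel (\<lambda>s. Kx * r^2 * (s^4 * phi s))" by (intro integrable_mult_right mom_int')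
    fix s
    have h: "\<bar>xi (r * s) - 4*cc^2\<bar> * (s^2 * phi s) \<le> (Kx * (r * s)^2) * (s^2 * phi s)"
      using xi_quad[of "r * s"] phi_pos[of s] by (intro mult_right_mono) auto
    have e1: "\<bar>(xi (r * s) - 4*cc^2) * (s^2 * phi s)\<bar> = \<bar>xi (r * s) - 4*cc^2\<bar> * (s^2 * phi s)"
      using phi_pos[of s] by (simp add: abs_mult)
    have e2: "Kx * r^2 * (s^4 * phi s) = (Kx * (r * s)^2) * (s^2 * phi s)"
      by (simp only: power_mult_distrib power4_eq_xxxx power2_eq_square mult_ac)
    show "\<bar>(xi (r * s) - 4*cc^2) * (s^2 * phi s)\<bar> \<le> Kx * r^2 * (s^4 * phi s)"
      unfolding e1 e2 by (rule h)
  qed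
  also have "\<dots> = 3 * Kx * r^2" by (simp add: mom4)
  finally show ?thesis .
qed

definition Fk :: "nat \<Rightarrow> real \<Rightarrow> real" where
  "Fk k r = (\<integral>u. xi u * u^k * phi (u / r) \<partial>lborel)"
definition Ak :: "nat \<Rightarrow> real" where
  "Ak k = cc * (\<integral>u. xi u * u^k \<partial>lborel)"

lemma A0_Ak: "A0 = Ak 0" by (simp add: A0_def Ak_def cc_def)
lemma A2_Ak: "A2 = Ak 2" by (simp add: A2_def Ak_def cc_def)

lemma Fk_int: "integrable lborel (\<lambda>u. xi u * u^k * phi (u / r))"
proof (rule Bochner_Integration.integrable_bound)
  show "integrable lborel (\<lambda>u. cc * (xi u * \<bar>u\<bar>^k))" by (intro integrable_mult_right xi_integrable_abs)
  show "AE u in lborel. norm (xi u * u^k * phi (u / r)) \<le> norm (cc * (xi u * \<bar>u\<bar>^k))"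
  proof (rule AE_I2)
    fix u :: real
    have "xi u * \<bar>u\<bar>^k * phi (u / r) \<le> xi u * \<bar>u\<bar>^k * cc"
      using xi_pos[of u] phi_le_cc[of "u/r"] by (intro mult_left_mono) auto
    then show "norm (xi u * u^k * phi (u / r)) \<le> norm (cc * (xi u * \<bar>u\<bar>^k))"
      using xi_pos[of u] phi_pos[of "u/r"] cc_pos by (simp add: abs_mult power_abs mult_ac)
  qed
qed measurable

lemma zeta_Fk:
  assumes r: "r > 0"
  shows "r^(k+1) * (\<integral>s. s^k * xi (r * s) * phi s \<partial>lborel) = Fk k r"
proof -
  have "Fk k r = \<bar>r\<bar> *\<^sub>R (\<integral>x. xi (0 + r * x) * (0 + r * x)^k * phi ((0 + r * x) / r) \<partial>lborel)"
    unfolding Fk_def by (rule lborel_integral_real_affine) (use r in simp)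
  also have "\<dots> = r * (\<integral>x. r^k * (x^k * xi (r * x) * phi x) \<partial>lborel)"
    using r by (simp add: power_mult_distrib mult_ac)
  also have "\<dots> = r^(k+1) * (\<integral>s. s^k * xi (r * s) * phi s \<partial>lborel)"
    by simp
  finally show ?thesis by simp
qed

lemma zeta0_F: "r > 0 \<Longrightarrow> r * zeta 0 r = Fk 0 r"
  using zeta_Fk[of r 0] by (simp add: zeta0_eq)
lemma zeta2_F: "r > 0 \<Longrightarrow> r^3 * zeta 2 r = Fk 2 r"
  using zeta_Fk[of r 2] by (simp add: zeta2_eq)

lemma Fk_le: assumes "even k" shows "Fk k r \<le> Ak k"
proof -
  have "Fk k r \<le> (\<integral>u. cc * (xi u * u^k) \<partial>lborel)" unfolding Fk_def
  proof (rule integral_mono[OF Fk_int])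
    show "integrable lborel (\<lambda>u. cc * (xi u * u^k))" by (intro integrable_mult_right xi_integrable)
    fix u :: real
    have "u^k \<ge> 0" using assms(1) by (auto elim!: evenE)
    then have "xi u * u^k * phi (u / r) \<le> (xi u * u^k) * cc"
      using xi_pos[of u] phi_le_cc[of "u/r"] by (intro mult_left_mono) auto
    then show "xi u * u^k * phi (u / r) \<le> cc * (xi u * u^k)" by (simp add: mult_ac)
  qed
  then show ?thesis by (simp add: Ak_def)
qed

definition Ek :: "nat \<Rightarrow> real" where "Ek k = cc / 2 * (\<integral>u. xi u * u^(k+2) \<partial>lborel)"

lemma Fk_ge: assumes "even k" "r > 0" shows "Fk k r \<ge> Ak k - Ek k / r^2"
proof -
  have "Ak k - Fk k r = (\<integral>u. xi u * u^k * (cc - phi (u / r)) \<partial>lborel)"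
  proof -
    have "(\<lambda>u. xi u * u^k * (cc - phi (u / r))) = (\<lambda>u. cc * (xi u * u^k) - xi u * u^k * phi (u / r))"
      by (rule ext) (simp add: algebra_simps)
    then show ?thesis unfolding Ak_def Fk_def
      by (simp add: Bochner_Integration.integral_diff integrable_mult_right xi_integrable Fk_int)
  qed
  also have "\<dots> \<le> (\<integral>u. cc / (2 * r^2) * (xi u * u^(k+2)) \<partial>lborel)"
  proof (rule integral_mono)
    have "(\<lambda>u. xi u * u^k * (cc - phi (u / r))) = (\<lambda>u. cc * (xi u * u^k) - xi u * u^k * phi (u / r))"
      by (rule ext) (simp add: algebra_simps)
    then show "integrable lborel (\<lambda>u. xi u * u^k * (cc - phi (u / r)))"
      by (simp add: Bochner_Integration.integrable_diff integrable_mult_right xi_integrable Fk_int)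
    show "integrable lborel (\<lambda>u. cc / (2 * r^2) * (xi u * u^(k+2)))"
      by (intro integrable_mult_right xi_integrable)
    fix u :: real
    have uk: "u^k \<ge> 0" using assms(1) by (auto elim!: evenE)
    have "cc - phi (u / r) \<le> cc * ((u/r)^2 / 2)"
    proof -
      have "1 - exp (- ((u/r)^2) / 2) \<le> (u/r)^2 / 2" using exp_ge_add_one_self[of "- ((u/r)^2) / 2"] by simp
      then have "cc * (1 - exp (- ((u/r)^2) / 2)) \<le> cc * ((u/r)^2 / 2)"
        using cc_pos by (intro mult_left_mono) auto
      then show ?thesis by (simp add: phi_cc right_diff_distrib)
    qed
    then have "xi u * u^k * (cc - phi (u / r)) \<le> xi u * u^k * (cc * ((u/r)^2 / 2))"
      using xi_pos[of u] uk by (intro mult_left_mono) auto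
    also have "\<dots> = cc / (2 * r^2) * (xi u * u^(k+2))"
      using assms(2) by (simp add: power_divide power_add field_simps power2_eq_square)
    finally show "xi u * u^k * (cc - phi (u / r)) \<le> cc / (2 * r^2) * (xi u * u^(k+2))" .
  qed
  also have "\<dots> = Ek k / r^2" by (simp add: Ek_def)
  finally show ?thesis by simp
qed

lemma zeta0_upper: "r > 0 \<Longrightarrow> zeta 0 r \<le> A0 / r"
  using zeta0_F[of r] Fk_le[of 0 r] by (simp add: A0_Ak field_simps)
lemma zeta0_lower: "r > 0 \<Longrightarrow> zeta 0 r \<ge> (A0 - Ek 0 / r^2) / r"
  using zeta0_F[of r] Fk_ge[of 0 r] by (simp add: A0_Ak pos_divide_le_eq mult.commute)
lemma zeta2_upper: "r > 0 \<Longrightarrow> zeta 2 r \<le> A2 / r^3"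
  using zeta2_F[of r] Fk_le[of 2 r] by (simp add: A2_Ak field_simps)
lemma zeta2_lower: "r > 0 \<Longrightarrow> zeta 2 r \<ge> (A2 - Ek 2 / r^2) / r^3"
  using zeta2_F[of r] Fk_ge[of 2 r] by (simp add: A2_Ak pos_divide_le_eq mult.commute)

definition r0 :: real where "r0 = min 1 (sqrt (cc^2 / (3 * Kx)))"

lemma Kx_pos: "Kx > 0" using cc_pos Cx_pos unfolding Kx_def by (intro add_pos_pos mult_pos_pos) auto

lemma r0_pos: "r0 > 0" using cc_pos Kx_pos by (simp add: r0_def)

lemma small_bounds: assumes "0 \<le> r" "r \<le> r0" shows "zeta 0 r \<ge> 3*cc^2" "zeta 2 r \<ge> 3*cc^2"
proof -
  have "r^2 \<le> r0^2" using assms by (intro power_mono) auto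
  also have "\<dots> \<le> (sqrt (cc^2 / (3 * Kx)))^2" using r0_pos by (intro power_mono) (auto simp: r0_def)
  also have "\<dots> = cc^2 / (3 * Kx)" using Kx_pos by simp
  finally have "3 * Kx * r^2 \<le> cc^2" using Kx_pos by (simp add: field_simps)
  moreover have "0 \<le> Kx * r^2" using Kx_pos by simp
  ultimately show "zeta 0 r \<ge> 3*cc^2" "zeta 2 r \<ge> 3*cc^2"
    using zeta0_small[of r] zeta2_small[of r] by (simp_all add: abs_le_iff)
qed

lemma A0_pos: "A0 > 0"
proof -
  have "r0 * zeta 0 r0 \<le> A0" using zeta0_upper[OF r0_pos] r0_pos by (simp add: field_simps)
  moreover have "r0 * zeta 0 r0 > 0" using small_bounds(1)[of r0] r0_pos cc_pos
    by (smt (verit) mult_pos_pos zero_less_power)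
  ultimately show ?thesis by simp
qed

lemma A2_pos: "A2 > 0"
proof -
  have "r0^3 * zeta 2 r0 \<le> A2" using zeta2_upper[OF r0_pos] r0_pos by (simp add: field_simps)
  moreover have "r0^3 * zeta 2 r0 > 0" using small_bounds(2)[of r0] r0_pos cc_pos
    by (smt (verit) mult_pos_pos zero_less_power)
  ultimately show ?thesis by simp
qed

lemma Ek_nonneg: "even k \<Longrightarrow> Ek k \<ge> 0"
proof -
  assume k: "even k"
  have "0 \<le> (\<integral>u. xi u * u^(k+2) \<partial>lborel)"
  proof (rule integral_nonneg_AE, rule AE_I2)
    fix u :: real
    have "k + 2 = 2 * (k div 2 + 1)" using k by auto
    then have "0 \<le> u^(k+2)" by (metis zero_le_even_power')
    then show "0 \<le> xi u * u^(k+2)" using xi_pos[of u] by simp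
  qed
  then show ?thesis unfolding Ek_def using cc_pos by simp
qed

definition g :: "nat \<Rightarrow> real \<Rightarrow> real" where
  "g n r = zeta 0 r powr ((real n - 1) / 2) * sqrt (zeta 2 r) * real n * r ^ (n - 1)"

lemma alpha_Ioo: "snr \<ge> 0 \<Longrightarrow> alpha snr n = (LBINT r:{0<..<sqrt snr}. g n r)"
  unfolding alpha_def g_def
  by (subst interval_integral_Ioo) (auto simp: zero_ereal_def)

lemma g_meas[measurable]: "g n \<in> borel_measurable borel"
  unfolding g_def by measurable

lemma g_nonneg: "r \<ge> 0 \<Longrightarrow> g n r \<ge> 0"
  unfolding g_def using zeta2_nonneg[of r] by (intro mult_nonneg_nonneg) auto

lemma g_bound: assumes "0 \<le> r" "r \<le> b"
  shows "g n r \<le> Cx powr ((real n - 1) / 2) * sqrt Cx * real n * b ^ (n - 1)"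
proof -
  have p: "0 \<le> (real n - 1) / 2 \<or> n = 0" by auto
  have "zeta 0 r powr ((real n - 1) / 2) \<le> Cx powr ((real n - 1) / 2) \<or> n = 0"
    using p zeta0_nonneg[of r] zeta0_le[of r] by (auto intro: powr_mono2)
  moreover have "sqrt (zeta 2 r) \<le> sqrt Cx" using zeta2_le[of r] by simp
  moreover have "r ^ (n - 1) \<le> b ^ (n - 1)" using assms by (intro power_mono) auto
  ultimately show ?thesis unfolding g_def
    using assms zeta2_nonneg[of r] by (cases "n = 0") (auto intro!: mult_mono simp: Cx_pos less_imp_le zeta0_nonneg)
qed

lemma g_int_Icc: assumes "0 \<le> a" shows "set_integrable lborel {a..b} (g n)"
  unfolding set_integrable_def
proof (rule integrableI_bounded_set_indicator)
  show "AE x in lborel. x \<in> {a..b} \<longrightarrow> norm (g n x) \<le> Cx powr ((real n - 1) / 2) * sqrt Cx * real n * b ^ (n - 1)"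
  proof (rule AE_I2, rule impI)
    fix x assume "x \<in> {a..b}"
    then show "norm (g n x) \<le> Cx powr ((real n - 1) / 2) * sqrt Cx * real n * b ^ (n - 1)"
      using assms g_bound[of x b n] g_nonneg[of x n] by auto
  qed
qed (auto simp: emeasure_lborel_Icc_eq)

lemma g_int: assumes "0 \<le> a" "A \<subseteq> {a..b}" "A \<in> sets borel" shows "set_integrable lborel A (g n)"
  using set_integrable_subset[OF g_int_Icc[OF assms(1)]] assms by auto

lemma set_int_subset_le:
  fixes f :: "real \<Rightarrow> real"
  assumes "set_integrable lborel A f" "B \<in> sets borel" "B \<subseteq> A" "\<And>x. x \<in> A \<Longrightarrow> f x \<ge> 0"
  shows "(LBINT x:B. f x) \<le> (LBINT x:A. f x)"
proof -
  have iB: "set_integrable lborel B f" using set_integrable_subset[OF assms(1)] assms by auto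
  show ?thesis unfolding set_lebesgue_integral_def
    using iB assms(1) unfolding set_integrable_def
    by (intro integral_mono) (auto simp: indicator_def assms(4) subsetD[OF assms(3)])
qed

lemma ftc_pow: assumes "0 \<le> a" "a \<le> b"
  shows "(LBINT r:{a<..<b}. real n * r^(n-1)) = b^n - a^n"
proof -
  have "(LBINT r=a..b. real n * r^(n-1)) = b^n - a^n"
    by (rule interval_integral_FTC_finite)
       (auto intro!: continuous_intros derivative_eq_intros
             simp: has_real_derivative_iff_has_vector_derivative[symmetric])
  then show ?thesis using assms by (subst (asm) interval_integral_Ioo) auto
qed

lemma int_pow: "set_integrable lborel {a<..<b} (\<lambda>r. real n * r^(n-1))"
  by (rule set_integrable_subset[OF borel_integrable_atLeastAtMost'[of a b]]) (auto intro!: continuous_intros)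

lemma sqrt_r3: "r > 0 \<Longrightarrow> sqrt (r^3) = r powr (3/2)"
proof -
  assume r: "r > 0"
  have a: "r powr (3/2) = sqrt (r powr 3)" using powr_half_sqrt_powr[of r 3] r by simp
  have b: "r powr 3 = r^3" using powr_realpow[of r 3] r by simp
  show ?thesis unfolding a b ..
qed

lemma g_lower_gen:
  assumes "n \<ge> 1" "0 \<le> r" "0 < L" "L \<le> zeta 0 r" "L \<le> zeta 2 r"
  shows "L powr (real n / 2) * (real n * r^(n-1)) \<le> g n r"
proof -
  have "L powr ((real n - 1) / 2) \<le> zeta 0 r powr ((real n - 1) / 2)"
    using assms by (intro powr_mono2) auto
  moreover have "L powr (1/2) \<le> sqrt (zeta 2 r)"
    using assms by (simp add: powr_half_sqrt)
  ultimately have "L powr ((real n - 1) / 2) * L powr (1/2) \<le> zeta 0 r powr ((real n - 1) / 2) * sqrt (zeta 2 r)"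
    by (intro mult_mono) auto
  moreover have "L powr ((real n - 1) / 2) * L powr (1/2) = L powr (real n / 2)"
    by (simp add: powr_add[symmetric] add_divide_distrib[symmetric])
  ultimately have "L powr (real n / 2) * (real n * r^(n-1)) \<le> (zeta 0 r powr ((real n - 1) / 2) * sqrt (zeta 2 r)) * (real n * r^(n-1))"
    using assms by (intro mult_right_mono) auto
  then show ?thesis by (simp add: g_def mult_ac)
qed

lemma g_upper_gen:
  assumes "n \<ge> 1" "0 \<le> r" "zeta 0 r \<le> U" "zeta 2 r \<le> U"
  shows "g n r \<le> U powr (real n / 2) * (real n * r^(n-1))"
proof -
  have U: "0 \<le> U" using assms zeta0_nonneg[of r] by linarith
  have "zeta 0 r powr ((real n - 1) / 2) \<le> U powr ((real n - 1) / 2)"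
    using assms zeta0_nonneg[of r] by (intro powr_mono2) auto
  moreover have "sqrt (zeta 2 r) \<le> U powr (1/2)"
    using assms U zeta2_nonneg[of r] by (simp add: powr_half_sqrt)
  ultimately have "zeta 0 r powr ((real n - 1) / 2) * sqrt (zeta 2 r) \<le> U powr ((real n - 1) / 2) * U powr (1/2)"
    using zeta2_nonneg[of r] by (intro mult_mono) auto
  moreover have "U powr ((real n - 1) / 2) * U powr (1/2) = U powr (real n / 2)"
    by (simp add: powr_add[symmetric] add_divide_distrib[symmetric])
  ultimately have "(zeta 0 r powr ((real n - 1) / 2) * sqrt (zeta 2 r)) * (real n * r^(n-1)) \<le> U powr (real n / 2) * (real n * r^(n-1))"
    using assms by (intro mult_right_mono) auto
  then show ?thesis by (simp add: g_def mult_ac)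
qed

lemma two_pi: "2 / pi = 4 * cc^2" by (simp add: cc_sq)

lemma part1_bounds:
  assumes n: "n \<ge> 1" and snr: "snr > 0" and y: "y = 3 * Kx * snr / (4*cc^2)" and y1: "y < 1"
  shows "(4*cc^2*(1-y)) powr (real n / 2) * snr powr (real n / 2) \<le> alpha snr n"
        "alpha snr n \<le> (4*cc^2*(1+y)) powr (real n / 2) * snr powr (real n / 2)"
proof -
  let ?T = "sqrt snr"
  let ?a = "4*cc^2"
  have a: "?a > 0" using cc_pos by simp
  have y0: "y \<ge> 0" using y Kx_pos snr a by simp
  have bnd: "?a*(1-y) \<le> zeta k r \<and> zeta k r \<le> ?a*(1+y)" if "k = 0 \<or> k = 2" "r \<in> {0<..<?T}" for k r
  proof -
    have "r^2 \<le> snr" using that snr by (smt (verit) greaterThanLessThan_iff power_mono real_sqrt_pow2)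
    then have "3 * Kx * r^2 \<le> 3 * Kx * snr" using Kx_pos by simp
    also have "\<dots> = ?a * y" using y a by simp
    finally have h: "3 * Kx * r^2 \<le> ?a * y" .
    have "Kx * r^2 \<le> 3 * Kx * r^2" using Kx_pos by simp
    then show ?thesis using that h zeta0_small[of r] zeta2_small[of r]
      by (auto simp: abs_le_iff algebra_simps)
  qed
  have T: "?T^n = snr powr (real n / 2)"
    using snr by (simp add: powr_half_sqrt[symmetric] powr_realpow[symmetric] powr_powr)
  have int1: "set_integrable lborel {0<..<?T} (g n)" by (rule g_int[of 0 _ ?T]) auto
  have I: "(LBINT r:{0<..<?T}. real n * r^(n-1)) = snr powr (real n/2)"
  proof -
    have "(LBINT r:{0<..<?T}. real n * r^(n-1)) = ?T^n - 0^n" by (rule ftc_pow) (use snr in auto)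
    also have "\<dots> = snr powr (real n / 2)" using n T by simp
    finally show ?thesis .
  qed
  have IL: "(LBINT r:{0<..<?T}. (?a*(1-y)) powr (real n / 2) * (real n * r^(n-1))) = (?a*(1-y)) powr (real n / 2) * snr powr (real n/2)"
    using I by (simp add: set_integral_mult_right)
  have IU: "(LBINT r:{0<..<?T}. (?a*(1+y)) powr (real n / 2) * (real n * r^(n-1))) = (?a*(1+y)) powr (real n / 2) * snr powr (real n/2)"
    using I by (simp add: set_integral_mult_right)
  have "(LBINT r:{0<..<?T}. (?a*(1-y)) powr (real n / 2) * (real n * r^(n-1))) \<le> (LBINT r:{0<..<?T}. g n r)"
    using n y1 a bnd by (intro set_integral_mono int1 set_integrable_mult_right int_pow g_lower_gen) auto
  then show "(?a*(1-y)) powr (real n / 2) * snr powr (real n / 2) \<le> alpha snr n"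
    unfolding IL alpha_Ioo[OF less_imp_le[OF snr]] .
  have "(LBINT r:{0<..<?T}. g n r) \<le> (LBINT r:{0<..<?T}. (?a*(1+y)) powr (real n / 2) * (real n * r^(n-1)))"
    using n y0 a bnd by (intro set_integral_mono int1 set_integrable_mult_right int_pow g_upper_gen) auto
  then show "alpha snr n \<le> (?a*(1+y)) powr (real n / 2) * snr powr (real n / 2)"
    unfolding IU alpha_Ioo[OF less_imp_le[OF snr]] .
qed

lemma part1:
  "\<forall>e>0. \<exists>d>0. \<forall>nt::nat. \<forall>snr::real. nt \<ge> 1 \<and> snr > 0 \<and> real nt * snr < d \<longrightarrow>
            \<bar>alpha snr nt / ((2 / pi * snr) powr (real nt / 2)) - 1\<bar> < e"
proof (intro allI impI)
  fix e :: real assume e: "e > 0"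
  define a where "a = 4 * cc^2"
  have a: "a > 0" using cc_pos by (simp add: a_def)
  define t where "t = min (e/4) (1/2)"
  have t: "t > 0" "t \<le> e/4" "t \<le> 1/2" using e by (auto simp: t_def)
  define d where "d = t * a / (3 * Kx)"
  have d: "d > 0" using t a Kx_pos by (simp add: d_def)
  show "\<exists>d>0. \<forall>nt::nat. \<forall>snr::real. nt \<ge> 1 \<and> snr > 0 \<and> real nt * snr < d \<longrightarrow>
            \<bar>alpha snr nt / ((2 / pi * snr) powr (real nt / 2)) - 1\<bar> < e"
  proof (intro exI[of _ d] conjI allI impI d)
    fix n :: nat and snr :: real
    assume H: "n \<ge> 1 \<and> snr > 0 \<and> real n * snr < d"
    then have n: "n \<ge> 1" and snr: "snr > 0" and nd: "real n * snr < d" by auto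
    define y where "y = 3 * Kx * snr / a"
    have y0: "y \<ge> 0" using snr Kx_pos a by (simp add: y_def)
    have ny: "real n * y < t"
    proof -
      have "real n * y = (3 * Kx / a) * (real n * snr)" by (simp add: y_def)
      also have "\<dots> < (3 * Kx / a) * d" using nd Kx_pos a by (intro mult_strict_left_mono) auto
      also have "\<dots> = t" using Kx_pos a by (simp add: d_def)
      finally show ?thesis .
    qed
    have yny: "y \<le> real n * y" using n y0 by (simp add: mult_le_cancel_right1)
    have y1: "y < 1" using ny yny t by linarith
    have B: "(a*(1-y)) powr (real n / 2) * snr powr (real n / 2) \<le> alpha snr n"
            "alpha snr n \<le> (a*(1+y)) powr (real n / 2) * snr powr (real n / 2)"
      using part1_bounds[OF n snr _ y1] by (simp_all add: y_def a_def)
    define D where "D = (2 / pi * snr) powr (real n / 2)"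
    have D: "D = a powr (real n / 2) * snr powr (real n / 2)"
      unfolding D_def two_pi a_def using snr cc_pos by (simp add: powr_mult)
    have Dp: "D > 0" using a snr by (simp add: D)
    have lo: "(1-y) powr (real n / 2) * D \<le> alpha snr n"
      using B(1) a y1 snr by (simp add: D powr_mult mult_ac)
    have hi: "alpha snr n \<le> (1+y) powr (real n / 2) * D"
      using B(2) a y0 snr by (simp add: D powr_mult mult_ac)
    have l1: "(1-y) powr (real n / 2) \<ge> 1 - real n * y"
    proof -
      have "(1-y) powr real n \<le> (1-y) powr (real n / 2)"
        using y0 y1 by (intro powr_mono') auto
      moreover have "(1-y) powr real n = (1 + (-y))^n" using y1 by (simp add: powr_realpow)
      moreover have "1 + real n * (-y) \<le> (1 + (-y))^n" using y1 by (intro Bernoulli_inequality) auto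
      ultimately show ?thesis by simp
    qed
    have u1: "(1+y) powr (real n / 2) \<le> 1 + 2 * (real n * y)"
    proof -
      have "(1+y) powr (real n / 2) \<le> (1+y) powr real n"
        using y0 by (intro powr_mono) auto
      also have "\<dots> = (1+y)^n" using y0 by (simp add: powr_realpow)
      also have "\<dots> \<le> exp y ^ n" using y0 exp_ge_add_one_self[of y] by (intro power_mono) auto
      also have "\<dots> = exp (real n * y)" by (simp add: exp_of_nat_mult)
      also have "\<dots> \<le> 1 + real n * y + (real n * y)^2"
        using ny t y0 by (intro exp_bound) auto
      also have "\<dots> \<le> 1 + 2 * (real n * y)"
      proof -
        have "(real n * y)^2 \<le> real n * y * 1" unfolding power2_eq_square
          using ny t y0 by (intro mult_left_mono) auto
        then show ?thesis by linarith
      qed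
      finally show ?thesis .
    qed
    have "alpha snr n / D \<ge> 1 - real n * y"
      using lo l1 Dp by (simp add: pos_le_divide_eq) (smt (verit) mult_right_mono)
    moreover have "alpha snr n / D \<le> 1 + 2 * (real n * y)"
      using hi u1 Dp by (simp add: pos_divide_le_eq) (smt (verit) mult_right_mono)
    ultimately have "\<bar>alpha snr n / D - 1\<bar> < e" using ny t by (simp add: abs_less_iff)
    then show "\<bar>alpha snr n / ((2 / pi * snr) powr (real n / 2)) - 1\<bar> < e" by (simp add: D_def)
  qed
qed

lemma zeta0_pos: "zeta 0 r > 0"
proof -
  have int: "integrable lborel (\<lambda>s. xi (r * s) * phi s)" by (rule z0_int)
  have nn: "AE s in lborel. 0 \<le> xi (r * s) * phi s"
    by (rule AE_I2) (auto intro!: mult_nonneg_nonneg less_imp_le[OF xi_pos] less_imp_le[OF phi_pos])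
  have "zeta 0 r \<noteq> 0"
  proof
    assume "zeta 0 r = 0"
    then have "AE s in lborel. xi (r * s) * phi s = 0"
      using integral_nonneg_eq_0_iff_AE[OF int nn] by (simp add: zeta0_eq)
    then have "AE s in (lborel::real measure). False"
      by (rule AE_mp) (rule AE_I2, metis xi_pos phi_pos mult_pos_pos less_irrefl)
    then have "ae_filter (lborel::real measure) = bot" by (simp add: eventually_False)
    then show False by (simp add: ae_filter_eq_bot_iff)
  qed
  then show ?thesis using zeta0_nonneg[of r] by simp
qed

lemma int_tail: "set_integrable lborel {1<..} (\<lambda>r::real. r powr (-3/2))"
proof -
  have "set_integrable lborel (einterval 1 \<infinity>) (\<lambda>r::real. r powr (-3/2))"
  proof (rule interval_integral_FTC_nonneg[where F="\<lambda>r. - 2 * r powr (-1/2)" and A="-2" and B=0])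
    show "(1::ereal) < \<infinity>" by simp
    fix x assume x: "1 < ereal x" "ereal x < \<infinity>"
    then have "x > 0" by (simp add: one_ereal_def)
    then show "DERIV (\<lambda>r. - 2 * r powr (-1/2)) x :> x powr (-3/2)"
      by (auto intro!: derivative_eq_intros simp: field_simps)
    show "isCont (\<lambda>r. r powr (-3/2)) x" using \<open>x > 0\<close> by (intro continuous_intros) auto
  next
    show "AE x in lborel. 1 < ereal x \<longrightarrow> ereal x < \<infinity> \<longrightarrow> 0 \<le> x powr (-3/2)" by simp
    have "((\<lambda>r::real. - 2 * r powr (-1/2)) \<longlongrightarrow> -2) (at_right 1)"
      by (rule tendsto_eq_intros tendsto_ident_at tendsto_const | simp)+
    then show "(((\<lambda>r. - 2 * r powr (-1/2)) \<circ> real_of_ereal) \<longlongrightarrow> -2) (at_right 1)"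
      by (simp add: one_ereal_def ereal_tendsto_simps)
    have "((\<lambda>r::real. r powr (-1/2)) \<longlongrightarrow> 0) at_top"
      by (rule tendsto_neg_powr) (auto intro: filterlim_ident)
    then have "((\<lambda>r::real. - 2 * r powr (-1/2)) \<longlongrightarrow> 0) at_top"
      using tendsto_mult_right_zero by blast
    then show "(((\<lambda>r. - 2 * r powr (-1/2)) \<circ> real_of_ereal) \<longlongrightarrow> 0) (at_left \<infinity>)"
      by (simp add: ereal_tendsto_simps)
  qed
  then show ?thesis by (simp add: one_ereal_def)
qed

lemma powr_m32: "x powr (-3/2) = inverse (x powr (3/2::real))"
proof -
  have e: "(-3/2::real) = - (3/2)" by simp
  show ?thesis unfolding e by (rule powr_minus)
qed

lemma sz2_meas[measurable]: "(\<lambda>r. sqrt (zeta 2 r)) \<in> borel_measurable borel" by measurable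

lemma sz2_int: "set_integrable lborel {0..} (\<lambda>r. sqrt (zeta 2 r))"
proof -
  have i1: "set_integrable lborel {0..1} (\<lambda>r. sqrt (zeta 2 r))"
    unfolding set_integrable_def
  proof (rule integrableI_bounded_set_indicator[where B="sqrt Cx"])
    show "AE x in lborel. x \<in> {0..1} \<longrightarrow> norm (sqrt (zeta 2 x)) \<le> sqrt Cx"
      using zeta2_le zeta2_nonneg by auto
  qed auto
  have i2: "set_integrable lborel {1<..} (\<lambda>r. sqrt (zeta 2 r))"
    unfolding set_integrable_def
  proof (rule Bochner_Integration.integrable_bound)
    show "integrable lborel (\<lambda>x. sqrt A2 * (indicator {1<..} x *\<^sub>R x powr (-3/2)))"
      using int_tail unfolding set_integrable_def by (rule integrable_mult_right)
    show "AE x in lborel. norm (indicator {1<..} x *\<^sub>R sqrt (zeta 2 x)) \<le> norm (sqrt A2 * (indicator {1<..} x *\<^sub>R x powr (-3/2)))"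
    proof (rule AE_I2)
      fix x :: real
      show "norm (indicator {1<..} x *\<^sub>R sqrt (zeta 2 x)) \<le> norm (sqrt A2 * (indicator {1<..} x *\<^sub>R x powr (-3/2)))"
      proof (cases "x > 1")
        case True
        then have xp: "x > 0" by simp
        have "sqrt (zeta 2 x) \<le> sqrt (A2 / x^3)" using zeta2_upper[OF xp] by simp
        also have "\<dots> = sqrt A2 / x powr (3/2)" unfolding real_sqrt_divide sqrt_r3[OF xp] ..
        also have "\<dots> = sqrt A2 * inverse (x powr (3/2))" by (rule divide_inverse)
        also have "\<dots> = sqrt A2 * x powr (-3/2)" by (simp only: powr_m32)
        finally have h: "sqrt (zeta 2 x) \<le> sqrt A2 * x powr (-3/2)" .
        have i: "indicator {1<..} x = (1::real)" using True by (simp add: indicator_def)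
        have "0 \<le> sqrt A2 * x powr (-3/2)" using A2_pos by simp
        then show ?thesis unfolding i using h zeta2_nonneg[of x] by simp
      qed (simp add: indicator_def)
    qed
  qed measurable
  have "set_integrable lborel ({0..1} \<union> {1<..}) (\<lambda>r. sqrt (zeta 2 r))"
    by (rule set_integrable_Un[OF i1 i2]) auto
  moreover have "{0..1} \<union> {1<..} = {0::real..}" by auto
  ultimately show ?thesis by simp
qed

lemma g1_eq: "g 1 r = sqrt (zeta 2 r)"
  unfolding g_def using zeta0_pos[of r] by simp

lemma alpha1_eq: "snr \<ge> 0 \<Longrightarrow> alpha snr 1 = (LBINT r:{0..sqrt snr}. sqrt (zeta 2 r))"
proof -
  assume snr: "snr \<ge> 0"
  have "g 1 = (\<lambda>r. sqrt (zeta 2 r))" by (rule ext) (rule g1_eq)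
  then have "alpha snr 1 = (LBINT r:{0<..<sqrt snr}. sqrt (zeta 2 r))"
    using alpha_Ioo[OF snr, of 1] by simp
  also have "\<dots> = (LBINT r=0..ereal (sqrt snr). sqrt (zeta 2 r))"
    using snr by (subst interval_integral_Ioo) (auto simp: zero_ereal_def)
  also have "\<dots> = (LBINT r:{0..sqrt snr}. sqrt (zeta 2 r))"
    using snr by (subst zero_ereal_def, subst interval_integral_Icc) auto
  finally show ?thesis .
qed

definition L1 :: real where "L1 = (LBINT r:{0..}. sqrt (zeta 2 r))"

lemma L1_pos: "L1 > 0"
proof -
  have "(LBINT r:{0..r0}. sqrt (3 * cc^2)) \<le> (LBINT r:{0..r0}. sqrt (zeta 2 r))"
  proof (rule set_integral_mono)
    show "set_integrable lborel {0..r0} (\<lambda>r. sqrt (3 * cc^2))"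
      by (rule borel_integrable_atLeastAtMost') simp
    show "set_integrable lborel {0..r0} (\<lambda>r. sqrt (zeta 2 r))"
      by (rule set_integrable_subset[OF sz2_int]) auto
    fix r assume "r \<in> {0..r0}"
    then show "sqrt (3 * cc^2) \<le> sqrt (zeta 2 r)" using small_bounds(2)[of r] by auto
  qed
  also have "\<dots> \<le> L1" unfolding L1_def
    by (rule set_int_subset_le[OF sz2_int]) (auto simp: zeta2_nonneg)
  finally have "(LBINT r:{0..r0}. sqrt (3 * cc^2)) \<le> L1" .
  moreover have "(LBINT r:{0..r0}. sqrt (3 * cc^2)) = r0 * sqrt (3 * cc^2)"
    using r0_pos by (simp add: set_integral_const)
  moreover have "r0 * sqrt (3 * cc^2) > 0" using r0_pos cc_pos by simp
  ultimately show ?thesis by linarith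
qed

lemma part2: "(\<lambda>snr. alpha snr 1) \<sim>[at_top] (\<lambda>snr. LBINT r:{0..}. sqrt (zeta 2 r))"
proof -
  have "((\<lambda>b. LBINT r:{0..b}. sqrt (zeta 2 r)) \<longlongrightarrow> L1) at_top"
    unfolding L1_def by (rule tendsto_set_lebesgue_integral_at_top[OF _ sz2_int]) auto
  then have "((\<lambda>snr. LBINT r:{0..sqrt snr}. sqrt (zeta 2 r)) \<longlongrightarrow> L1) at_top"
    by (rule filterlim_compose[OF _ sqrt_at_top])
  moreover have "eventually (\<lambda>snr. (LBINT r:{0..sqrt snr}. sqrt (zeta 2 r)) = alpha snr 1) at_top"
    using eventually_ge_at_top[of "0::real"] by eventually_elim (rule alpha1_eq[symmetric])
  ultimately have "((\<lambda>snr. alpha snr 1) \<longlongrightarrow> L1) at_top"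
    by (rule Lim_transform_eventually)
  then have "((\<lambda>snr. alpha snr 1 / L1) \<longlongrightarrow> L1 / L1) at_top"
    by (intro tendsto_divide tendsto_const) (use L1_pos in auto)
  then have "((\<lambda>snr. alpha snr 1 / L1) \<longlongrightarrow> 1) at_top" using L1_pos by simp
  then show ?thesis unfolding L1_def[symmetric] by (rule asymp_equivI')
qed

lemma powr_combine: assumes "r > 0"
  shows "r powr (real n - 1) / (r powr ((real n - 1) / 2) * r powr (3/2)) = r powr ((real n - 4) / 2)"
proof -
  have "r powr ((real n - 1) / 2) * r powr (3/2) * r powr ((real n - 4) / 2) = r powr ((real n - 1) / 2 + 3/2 + (real n - 4) / 2)"
    by (simp only: powr_add)
  also have "\<dots> = r powr (real n - 1)"
    by (rule arg_cong[where f="\<lambda>x. r powr x"]) (simp add: field_simps)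
  finally have e: "r powr (real n - 1) = r powr ((real n - 1) / 2) * r powr (3/2) * r powr ((real n - 4) / 2)" ..
  have "r powr ((real n - 1) / 2) * r powr (3/2) > 0" using assms by simp
  then show ?thesis unfolding e by (simp add: field_simps)
qed

lemma alg1: "c \<noteq> 0 \<Longrightarrow> d \<noteq> 0 \<Longrightarrow> (a / c * (b / d)) * (m * e) = m * (a * b) * (e / (c * d))"
  for a b c d e m :: real by (simp add: field_simps)

lemma alg2: "c \<noteq> 0 \<Longrightarrow> d \<noteq> 0 \<Longrightarrow> m * (a * b) * (x * y) * (e / (c * d)) = (a * x / c * (b * y / d)) * (m * e)"
  for a b c d e m x y :: real by (simp add: field_simps)

lemma rpow_eq: "r > 0 \<Longrightarrow> n \<ge> 1 \<Longrightarrow> r ^ (n - 1) = r powr (real n - 1)"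
  by (simp add: powr_realpow[symmetric] of_nat_diff)

definition KK :: "nat \<Rightarrow> real" where "KK n = A0 powr ((real n - 1) / 2) * sqrt A2"

lemma KK_pos: "KK n > 0" using A0_pos A2_pos by (simp add: KK_def)

lemma g_upper_large: assumes r: "r > 0" and n: "n \<ge> 1"
  shows "g n r \<le> real n * KK n * r powr ((real n - 4) / 2)"
proof -
  have "zeta 0 r powr ((real n - 1) / 2) \<le> (A0 / r) powr ((real n - 1) / 2)"
    using n zeta0_nonneg[of r] zeta0_upper[OF r] by (intro powr_mono2) auto
  also have "\<dots> = A0 powr ((real n - 1) / 2) / r powr ((real n - 1) / 2)"
    using A0_pos r by (simp add: powr_divide)
  finally have h1: "zeta 0 r powr ((real n - 1) / 2) \<le> A0 powr ((real n - 1) / 2) / r powr ((real n - 1) / 2)" .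
  have "sqrt (zeta 2 r) \<le> sqrt (A2 / r^3)" using zeta2_upper[OF r] by simp
  also have "\<dots> = sqrt A2 / r powr (3/2)"
  proof -
    have "sqrt (r^3) = r powr (3/2)" using r by (rule sqrt_r3)
    then show ?thesis by (simp add: real_sqrt_divide)
  qed
  finally have h2: "sqrt (zeta 2 r) \<le> sqrt A2 / r powr (3/2)" .
  have "g n r = (zeta 0 r powr ((real n - 1) / 2) * sqrt (zeta 2 r)) * (real n * r powr (real n - 1))"
    unfolding g_def using rpow_eq[OF r n] by simp
  also have "\<dots> \<le> (A0 powr ((real n - 1) / 2) / r powr ((real n - 1) / 2) * (sqrt A2 / r powr (3/2))) * (real n * r powr (real n - 1))"
    using h1 h2 zeta2_nonneg[of r] A0_pos by (intro mult_right_mono mult_mono) auto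
  also have "\<dots> = real n * KK n * (r powr (real n - 1) / (r powr ((real n - 1) / 2) * r powr (3/2)))"
    unfolding KK_def using r by (intro alg1) auto
  also have "\<dots> = real n * KK n * r powr ((real n - 4) / 2)" using powr_combine[OF r, of n] by simp
  finally show ?thesis .
qed

lemma g_lower_large: assumes r: "r > 0" and n: "n \<ge> 1" and d0: "0 \<le> d0" "d0 \<le> 1" and d2: "0 \<le> d2" "d2 \<le> 1"
  and z0: "zeta 0 r \<ge> A0 * (1 - d0) / r" and z2: "zeta 2 r \<ge> A2 * (1 - d2) / r^3"
  shows "real n * KK n * ((1 - d0) powr ((real n - 1) / 2) * sqrt (1 - d2)) * r powr ((real n - 4) / 2) \<le> g n r"
proof -
  have "(A0 * (1 - d0) / r) powr ((real n - 1) / 2) \<le> zeta 0 r powr ((real n - 1) / 2)"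
    using n z0 d0 A0_pos r by (intro powr_mono2) auto
  moreover have "(A0 * (1 - d0) / r) powr ((real n - 1) / 2) = A0 powr ((real n - 1) / 2) * (1 - d0) powr ((real n - 1) / 2) / r powr ((real n - 1) / 2)"
    using A0_pos r d0 by (simp add: powr_divide powr_mult)
  ultimately have h1: "A0 powr ((real n - 1) / 2) * (1 - d0) powr ((real n - 1) / 2) / r powr ((real n - 1) / 2) \<le> zeta 0 r powr ((real n - 1) / 2)"
    by simp
  have "sqrt (A2 * (1 - d2) / r^3) \<le> sqrt (zeta 2 r)" using z2 by simp
  moreover have "sqrt (A2 * (1 - d2) / r^3) = sqrt A2 * sqrt (1 - d2) / r powr (3/2)"
  proof -
    have "sqrt (r^3) = r powr (3/2)" using r by (rule sqrt_r3)
    then show ?thesis by (simp add: real_sqrt_divide real_sqrt_mult)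
  qed
  ultimately have h2: "sqrt A2 * sqrt (1 - d2) / r powr (3/2) \<le> sqrt (zeta 2 r)" by simp
  have "real n * KK n * ((1 - d0) powr ((real n - 1) / 2) * sqrt (1 - d2)) * r powr ((real n - 4) / 2)
      = (A0 powr ((real n - 1) / 2) * (1 - d0) powr ((real n - 1) / 2) / r powr ((real n - 1) / 2) * (sqrt A2 * sqrt (1 - d2) / r powr (3/2))) * (real n * r powr (real n - 1))"
    unfolding KK_def powr_combine[OF r, of n, symmetric] using r by (intro alg2) auto
  also have "\<dots> \<le> (zeta 0 r powr ((real n - 1) / 2) * sqrt (zeta 2 r)) * (real n * r powr (real n - 1))"
    using h1 h2 d2 A2_pos by (intro mult_right_mono mult_mono) auto
  also have "\<dots> = g n r"
    unfolding g_def using rpow_eq[OF r n] by simp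
  finally show ?thesis .
qed

lemma ftc_powr: fixes a b q :: real assumes "0 < a" "a \<le> b" "q > 0"
  shows "(LBINT r:{a<..<b}. r powr (q - 1)) = (b powr q - a powr q) / q"
proof -
  have "(LBINT r=a..b. r powr (q - 1)) = b powr q / q - a powr q / q"
  proof (rule interval_integral_FTC_finite)
    show "continuous_on {min a b..max a b} (\<lambda>r. r powr (q - 1))"
      using assms by (intro continuous_intros) auto
    fix x assume "min a b \<le> x" "x \<le> max a b"
    then have x: "x > 0" using assms by auto
    show "((\<lambda>r. r powr q / q) has_vector_derivative x powr (q - 1)) (at x within {min a b..max a b})"
      unfolding has_real_derivative_iff_has_vector_derivative[symmetric]
      using x assms by (auto intro!: derivative_eq_intros)
  qed
  then show ?thesis using assms by (subst (asm) interval_integral_Ioo) (auto simp: diff_divide_distrib)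
qed

lemma int_powr: fixes a b p :: real assumes "0 < a" shows "set_integrable lborel {a<..<b} (\<lambda>r. r powr p)"
  by (rule set_integrable_subset[OF borel_integrable_atLeastAtMost'[of a b]]) (use assms in \<open>auto intro!: continuous_intros\<close>)

lemma ftc_powr0: fixes b q :: real assumes "0 < b" "q > 0"
  shows "set_integrable lborel {0<..<b} (\<lambda>r. r powr (q - 1))"
        "(LBINT r:{0<..<b}. r powr (q - 1)) = b powr q / q"
proof -
  have *: "set_integrable lborel (einterval 0 (ereal b)) (\<lambda>r. r powr (q - 1)) \<and>
      (LBINT r=0..ereal b. r powr (q - 1)) = b powr q / q - 0"
  proof (intro conjI interval_integral_FTC_nonneg[where F="\<lambda>r. r powr q / q"])
    show "0 < ereal b" using assms by simp
    show "0 < ereal b" using assms by simp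
    fix x assume x: "0 < ereal x" "ereal x < ereal b"
    then have "x > 0" by simp
    then show "DERIV (\<lambda>r. r powr q / q) x :> x powr (q - 1)"
      using assms by (auto intro!: derivative_eq_intros)
    show "DERIV (\<lambda>r. r powr q / q) x :> x powr (q - 1)"
      using \<open>x > 0\<close> assms by (auto intro!: derivative_eq_intros)
    show "isCont (\<lambda>r. r powr (q - 1)) x" using \<open>x > 0\<close> by (intro continuous_intros) auto
    show "isCont (\<lambda>r. r powr (q - 1)) x" using \<open>x > 0\<close> by (intro continuous_intros) auto
  next
    show "AE x in lborel. 0 < ereal x \<longrightarrow> ereal x < ereal b \<longrightarrow> 0 \<le> x powr (q - 1)" by simp
    show "AE x in lborel. 0 < ereal x \<longrightarrow> ereal x < ereal b \<longrightarrow> 0 \<le> x powr (q - 1)" by simp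
    have ev: "\<forall>\<^sub>F x in at_right (0::real). 0 \<le> x"
      using eventually_at_right_less[of "0::real"] by eventually_elim auto
    have "((\<lambda>r. r powr q) \<longlongrightarrow> 0) (at_right 0)"
      by (rule tendsto_zero_powrI[OF tendsto_ident_at tendsto_const ev assms(2)])
    then have "((\<lambda>r. r powr q / q) \<longlongrightarrow> 0) (at_right 0)" by (rule tendsto_divide_zero)
    then show "(((\<lambda>r. r powr q / q) \<circ> real_of_ereal) \<longlongrightarrow> 0) (at_right 0)"
      by (simp add: zero_ereal_def ereal_tendsto_simps)
    then show "(((\<lambda>r. r powr q / q) \<circ> real_of_ereal) \<longlongrightarrow> 0) (at_right 0)" .
    have "((\<lambda>r. r powr q / q) \<longlongrightarrow> b powr q / q) (at_left b)"
      using assms by (intro tendsto_intros tendsto_ident_at) auto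
    then show "(((\<lambda>r. r powr q / q) \<circ> real_of_ereal) \<longlongrightarrow> b powr q / q) (at_left (ereal b))"
      by (simp add: ereal_tendsto_simps)
    then show "(((\<lambda>r. r powr q / q) \<circ> real_of_ereal) \<longlongrightarrow> b powr q / q) (at_left (ereal b))" .
  qed
  then show "set_integrable lborel {0<..<b} (\<lambda>r. r powr (q - 1))" by (simp add: zero_ereal_def)
  show "(LBINT r:{0<..<b}. r powr (q - 1)) = b powr q / q"
    using * assms by (subst (asm) interval_integral_Ioo) (auto simp: zero_ereal_def)
qed

lemma prod3: "0 \<le> x \<Longrightarrow> x \<le> 1 \<Longrightarrow> 0 \<le> y \<Longrightarrow> y \<le> 1 \<Longrightarrow> 0 \<le> z \<Longrightarrow> z \<le> 1 \<Longrightarrow>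
  1 - x - y - z \<le> (1 - x) * (1 - y) * (1 - z)" for x y z :: real
proof -
  assume a: "0 \<le> x" "x \<le> 1" "0 \<le> y" "y \<le> 1" "0 \<le> z" "z \<le> 1"
  define u where "u = (1 - x) * (1 - y)"
  have "u = 1 - x - y + x * y" unfolding u_def by (simp add: algebra_simps)
  moreover have "x * y \<ge> 0" using a by simp
  ultimately have u1: "u \<ge> 1 - x - y" by linarith
  have u2: "u \<le> 1" "u \<ge> 0" unfolding u_def using a by (auto simp: mult_le_one)
  have "u * z \<le> z" using u2 a by (simp add: mult_left_le_one_le)
  moreover have "u * (1 - z) = u - u * z" by (simp add: algebra_simps)
  ultimately have "u * (1 - z) \<ge> 1 - x - y - z" using u1 by linarith
  then show ?thesis by (simp add: u_def)
qed

lemma part4: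
  "\<forall>e>0. \<exists>M. \<forall>nt::nat. \<forall>snr::real. nt \<ge> 3 \<and> snr / real nt > M \<longrightarrow>
            \<bar>alpha snr nt / (2 * real nt / (real nt - 2) * A0 powr ((real nt - 1) / 2) * sqrt A2
                 * snr powr ((real nt - 2) / 4)) - 1\<bar> < e"
proof (intro allI impI)
  fix e :: real assume e: "e > 0"
  define e' where "e' = min e 1"
  have e': "0 < e'" "e' \<le> e" "e' \<le> 1" using e by (auto simp: e'_def)
  define s where "s = min (e'/4) (1/2)"
  have s: "0 < s" "s \<le> e'/4" "s \<le> 1/2" using e' by (auto simp: s_def)
  define \<theta> where "\<theta> = s^2"
  have th: "0 < \<theta>" "\<theta> < 1" "sqrt \<theta> = s"
  proof -
    show "0 < \<theta>" "sqrt \<theta> = s" using s by (auto simp: \<theta>_def)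
    have "s * s \<le> s * 1" using s by (intro mult_left_mono) auto
    then show "\<theta> < 1" using s unfolding \<theta>_def power2_eq_square by linarith
  qed
  have E0: "Ek 0 \<ge> 0" and E2: "Ek 2 \<ge> 0" by (simp_all add: Ek_nonneg)
  have W0: "Ek 0 / A0 \<ge> 0" "Ek 2 / A2 \<ge> 0" using E0 E2 A0_pos A2_pos by simp_all
  define W where "W = Ek 0 / A0 + Ek 2 / A2 + 1"
  have W: "W > 0" "Ek 0 / A0 \<le> W" "Ek 2 / A2 \<le> W" using W0 by (auto simp: W_def)
  define M where "M = 4 * W / (\<theta>^2 * e')"
  have Mpos: "M > 0" unfolding M_def using th e' W by (intro divide_pos_pos) auto
  have M0: "Ek 0 / (A0 * \<theta>^2 * M) \<le> e'/4" and M2: "Ek 2 / (A2 * \<theta>^2 * M) \<le> e'/4"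
  proof -
    have "Ek 0 / (A0 * \<theta>^2 * M) = (Ek 0 / A0) * e' / (4 * W)"
      unfolding M_def using th e' A0_pos W by (simp add: field_simps)
    also have "\<dots> \<le> W * e' / (4 * W)" using W e' by (intro divide_right_mono mult_right_mono) auto
    also have "\<dots> = e' / 4" using W by simp
    finally show "Ek 0 / (A0 * \<theta>^2 * M) \<le> e'/4" .
    have "Ek 2 / (A2 * \<theta>^2 * M) = (Ek 2 / A2) * e' / (4 * W)"
      unfolding M_def using th e' A2_pos W by (simp add: field_simps)
    also have "\<dots> \<le> W * e' / (4 * W)" using W e' by (intro divide_right_mono mult_right_mono) auto
    also have "\<dots> = e' / 4" using W by simp
    finally show "Ek 2 / (A2 * \<theta>^2 * M) \<le> e'/4" .
  qed
  show "\<exists>M. \<forall>nt::nat. \<forall>snr::real. nt \<ge> 3 \<and> snr / real nt > M \<longrightarrow>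
            \<bar>alpha snr nt / (2 * real nt / (real nt - 2) * A0 powr ((real nt - 1) / 2) * sqrt A2
                 * snr powr ((real nt - 2) / 4)) - 1\<bar> < e"
  proof (intro exI[of _ M] allI impI)
    fix n :: nat and snr :: real
    assume H: "n \<ge> 3 \<and> snr / real n > M"
    then have n: "n \<ge> 3" and sM: "snr / real n > M" by auto
    have np: "real n > 0" using n by simp
    have snrM: "snr > M * real n" using sM np by (simp add: pos_less_divide_eq)
    have "M * real n > 0" using Mpos np by simp
    then have snr: "snr > 0" using snrM by linarith
    have "M * 1 \<le> M * real n" using Mpos n by (intro mult_left_mono) auto
    then have snrM1: "snr > M" using snrM by linarith
    define T where "T = sqrt snr"
    have T: "T > 0" "T^2 = snr" using snr by (auto simp: T_def)
    define q where "q = (real n - 2) / 2"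
    have q: "q \<ge> 1/2" using n by (simp add: q_def)
    have qe: "(real n - 4) / 2 = q - 1" by (simp add: q_def field_simps)
    have Tq: "T powr q = snr powr ((real n - 2) / 4)"
      using snr by (simp add: T_def powr_half_sqrt[symmetric] powr_powr q_def)
    define Tg where "Tg = real n * KK n * (T powr q / q)"
    have Tg_eq: "2 * real n / (real n - 2) * A0 powr ((real n - 1) / 2) * sqrt A2 * snr powr ((real n - 2) / 4) = Tg"
      unfolding Tg_def KK_def Tq[symmetric] q_def using n by (simp add: field_simps)
    have Tgp: "Tg > 0" unfolding Tg_def using np KK_pos T q by simp
    have alpha_eq: "alpha snr n = (LBINT r:{0<..<T}. g n r)" using alpha_Ioo[of snr n] snr by (simp add: T_def)
    have up: "alpha snr n \<le> Tg"
    proof -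
      have "(LBINT r:{0<..<T}. g n r) \<le> (LBINT r:{0<..<T}. real n * KK n * r powr (q - 1))"
      proof (rule set_integral_mono)
        show "set_integrable lborel {0<..<T} (g n)" by (rule g_int[of 0 _ T]) auto
        show "set_integrable lborel {0<..<T} (\<lambda>r. real n * KK n * r powr (q - 1))"
          using ftc_powr0(1)[OF T(1), of q] q by (intro set_integrable_mult_right) auto
        fix r assume "r \<in> {0<..<T}"
        then show "g n r \<le> real n * KK n * r powr (q - 1)" using g_upper_large[of r n] n qe by auto
      qed
      also have "\<dots> = Tg" unfolding Tg_def using ftc_powr0(2)[OF T(1), of q] q by (simp add: set_integral_mult_right)
      finally show ?thesis using alpha_eq by simp
    qed
    define d0 where "d0 = Ek 0 / (A0 * \<theta>^2 * snr)"
    define d2 where "d2 = Ek 2 / (A2 * \<theta>^2 * snr)"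
    have nd0: "real n * d0 \<le> e'/4"
    proof -
      have "real n * d0 = Ek 0 / (A0 * \<theta>^2 * (snr / real n))" unfolding d0_def using np by (simp add: field_simps)
      also have "\<dots> \<le> Ek 0 / (A0 * \<theta>^2 * M)"
        using E0 A0_pos th Mpos sM by (intro divide_left_mono mult_left_mono mult_pos_pos) auto
      finally show ?thesis using M0 by linarith
    qed
    have d00: "0 \<le> d0" using E0 A0_pos snr th unfolding d0_def by simp
    have "d0 * 1 \<le> d0 * real n" using d00 n by (intro mult_left_mono) auto
    then have d0: "0 \<le> d0" "d0 \<le> real n * d0" using d00 by (simp_all add: mult.commute)
    have d2: "0 \<le> d2" "d2 \<le> e'/4"
    proof -
      show "0 \<le> d2" using E2 A2_pos snr th unfolding d2_def by simp
      have "d2 \<le> Ek 2 / (A2 * \<theta>^2 * M)" unfolding d2_def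
        using E2 A2_pos th Mpos snrM1 by (intro divide_left_mono mult_left_mono mult_pos_pos) auto
      then show "d2 \<le> e'/4" using M2 by linarith
    qed
    define c where "c = (1 - d0) powr ((real n - 1) / 2) * sqrt (1 - d2)"
    have d01: "d0 \<le> 1" "d2 \<le> 1" using d0 nd0 d2 e' by auto
    have lowpt: "real n * KK n * c * r powr (q - 1) \<le> g n r" if r: "r \<in> {\<theta> * T<..<T}" for r
    proof -
      have rp: "r > 0" using r th T by (auto intro: less_trans[OF mult_pos_pos])
      have r2: "\<theta>^2 * snr \<le> r^2"
      proof -
        have "(\<theta> * T)^2 \<le> r^2" using r th T by (intro power_mono) auto
        then show ?thesis using T by (simp add: power_mult_distrib)
      qed
      have z0: "zeta 0 r \<ge> A0 * (1 - d0) / r"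
      proof -
        have "Ek 0 / r^2 \<le> Ek 0 / (\<theta>^2 * snr)" using E0 r2 th snr rp by (intro divide_left_mono) auto
        then have "A0 * (1 - d0) \<le> A0 - Ek 0 / r^2" unfolding d0_def using A0_pos by (simp add: field_simps)
        then have "A0 * (1 - d0) / r \<le> (A0 - Ek 0 / r^2) / r" using rp by (simp add: divide_right_mono)
        then show ?thesis using zeta0_lower[OF rp] by linarith
      qed
      have z2: "zeta 2 r \<ge> A2 * (1 - d2) / r^3"
      proof -
        have "Ek 2 / r^2 \<le> Ek 2 / (\<theta>^2 * snr)" using E2 r2 th snr rp by (intro divide_left_mono) auto
        then have "A2 * (1 - d2) \<le> A2 - Ek 2 / r^2" unfolding d2_def using A2_pos by (simp add: field_simps)
        then have "A2 * (1 - d2) / r^3 \<le> (A2 - Ek 2 / r^2) / r^3" using rp by (simp add: divide_right_mono)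
        then show ?thesis using zeta2_lower[OF rp] by linarith
      qed
      have "real n * KK n * c * r powr ((real n - 4) / 2) \<le> g n r"
        unfolding c_def by (rule g_lower_large[OF rp _ d0(1) d01(1) d2(1) d01(2) z0 z2]) (use n in simp)
      then show ?thesis unfolding qe .
    qed
    have lo: "Tg * (c * (1 - \<theta> powr q)) \<le> alpha snr n"
    proof -
      have thT: "0 < \<theta> * T" "\<theta> * T \<le> T" using th T by auto
      have "(LBINT r:{\<theta> * T<..<T}. real n * KK n * c * r powr (q - 1)) \<le> (LBINT r:{\<theta> * T<..<T}. g n r)"
      proof (rule set_integral_mono)
        show "set_integrable lborel {\<theta> * T<..<T} (g n)" using thT by (intro g_int[of 0 _ T]) auto
        show "set_integrable lborel {\<theta> * T<..<T} (\<lambda>r. real n * KK n * c * r powr (q - 1))"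
          using thT by (intro set_integrable_mult_right int_powr) auto
      qed (rule lowpt)
      also have "\<dots> \<le> (LBINT r:{0<..<T}. g n r)"
        using thT by (intro set_int_subset_le g_int[of 0 _ T] g_nonneg) auto
      finally have "(LBINT r:{\<theta> * T<..<T}. real n * KK n * c * r powr (q - 1)) \<le> alpha snr n"
        using alpha_eq by simp
      moreover have "(LBINT r:{\<theta> * T<..<T}. real n * KK n * c * r powr (q - 1)) = Tg * (c * (1 - \<theta> powr q))"
      proof -
        have "(LBINT r:{\<theta> * T<..<T}. real n * KK n * c * r powr (q - 1)) = real n * KK n * c * ((T powr q - (\<theta> * T) powr q) / q)"
          using ftc_powr[OF thT, of q] q by (simp add: set_integral_mult_right)
        also have "(\<theta> * T) powr q = \<theta> powr q * T powr q" using th T by (simp add: powr_mult)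
        finally show ?thesis unfolding Tg_def by (simp add: field_simps)
      qed
      ultimately show ?thesis by linarith
    qed
    have c_lo: "c \<ge> (1 - real n * d0) * (1 - d2)"
    proof -
      have "(1 - d0) powr real n \<le> (1 - d0) powr ((real n - 1) / 2)"
        using d0 d01 by (intro powr_mono') auto
      moreover have "(1 - d0) powr real n = (1 + (-d0))^n \<or> d0 = 1"
        using d01 by (cases "d0 = 1") (auto simp: powr_realpow)
      moreover have "1 + real n * (-d0) \<le> (1 + (-d0))^n" using d01 by (intro Bernoulli_inequality) auto
      ultimately have a: "1 - real n * d0 \<le> (1 - d0) powr ((real n - 1) / 2)"
        using nd0 e' n by (cases "d0 = 1") (auto simp: powr_realpow)
      have "(1 - d2) * (1 - d2) \<le> (1 - d2) * 1" using d2 d01 by (intro mult_left_mono) auto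
      then have b: "1 - d2 \<le> sqrt (1 - d2)" by (intro real_le_rsqrt) (simp add: power2_eq_square)
      show ?thesis unfolding c_def using a b nd0 e' d2 d01 by (intro mult_mono) auto
    qed
    have thq: "\<theta> powr q \<le> s"
    proof -
      have "\<theta> powr q \<le> \<theta> powr (1/2)" using th q by (intro powr_mono') auto
      then show ?thesis using th by (simp add: powr_half_sqrt)
    qed
    have "c * (1 - \<theta> powr q) \<ge> (1 - real n * d0) * (1 - d2) * (1 - s)"
    proof -
      have "0 \<le> (1 - real n * d0) * (1 - d2)" using nd0 e' d2 by simp
      moreover have "1 - s \<le> 1 - \<theta> powr q" using thq by simp
      moreover have "0 \<le> 1 - s" using s by simp
      ultimately show ?thesis using c_lo by (intro mult_mono) auto
    qed
    moreover have "(1 - real n * d0) * (1 - d2) * (1 - s) \<ge> 1 - real n * d0 - d2 - s"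
      using nd0 d2 s e' d0 np by (intro prod3) (auto intro: mult_nonneg_nonneg)
    ultimately have "c * (1 - \<theta> powr q) > 1 - e" using nd0 d2 s e' by linarith
    then have r_lo: "alpha snr n / Tg > 1 - e" using lo Tgp
      by (simp add: pos_less_divide_eq) (smt (verit) mult_strict_left_mono mult.commute)
    have r_hi: "alpha snr n / Tg \<le> 1" using up Tgp by simp
    show "\<bar>alpha snr n / (2 * real n / (real n - 2) * A0 powr ((real n - 1) / 2) * sqrt A2
                 * snr powr ((real n - 2) / 4)) - 1\<bar> < e"
      unfolding Tg_eq using r_lo r_hi e by (simp add: abs_less_iff)
  qed
qed

lemma ftc_inv: fixes a b :: real assumes "0 < a" "a \<le> b"
  shows "(LBINT r:{a<..<b}. r powr (-1)) = ln b - ln a"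
proof -
  have "(LBINT r=a..b. r powr (-1)) = ln b - ln a"
  proof (rule interval_integral_FTC_finite)
    show "continuous_on {min a b..max a b} (\<lambda>r. r powr (-1))"
      using assms by (intro continuous_intros) auto
    fix x assume "min a b \<le> x" "x \<le> max a b"
    then have x: "x > 0" using assms by auto
    have "(ln has_real_derivative inverse x) (at x)" using x by (rule DERIV_ln)
    moreover have "x powr (-1) = inverse x" using x by (simp add: powr_minus)
    ultimately show "(ln has_vector_derivative x powr (-1)) (at x within {min a b..max a b})"
      unfolding has_real_derivative_iff_has_vector_derivative[symmetric]
      by (auto intro: has_field_derivative_at_within)
  qed
  then show ?thesis using assms by (subst (asm) interval_integral_Ioo) auto
qed

lemma split_int: assumes "0 \<le> a" "a < b" "b < c"
  shows "(LBINT r:{a<..<c}. g n r) = (LBINT r:{a<..b}. g n r) + (LBINT r:{b<..<c}. g n r)"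
proof -
  have e: "{a<..<c} = {a<..b} \<union> {b<..<c}" using assms by auto
  show ?thesis unfolding e
    by (rule set_integral_Un) (use assms in \<open>auto intro: g_int[of a _ c]\<close>)
qed

definition PP :: real where "PP = A0 powr (1/2) * sqrt A2"
lemma PP_KK: "KK 2 = PP" by (simp add: KK_def PP_def)
lemma PP_pos: "PP > 0" using KK_pos[of 2] PP_KK by simp

definition C1 :: real where "C1 = (LBINT r:{0<..1}. g 2 r)"

lemma alpha2_upper: assumes "snr > 1" shows "alpha snr 2 \<le> C1 + PP * ln snr"
proof -
  define T where "T = sqrt snr"
  have T: "T > 1" using assms by (simp add: T_def)
  have "alpha snr 2 = C1 + (LBINT r:{1<..<T}. g 2 r)"
    unfolding C1_def using alpha_Ioo[of snr 2] assms T split_int[of 0 1 T 2] by (simp add: T_def)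
  also have "(LBINT r:{1<..<T}. g 2 r) \<le> (LBINT r:{1<..<T}. 2 * KK 2 * r powr (-1))"
  proof (rule set_integral_mono)
    show "set_integrable lborel {1<..<T} (g 2)" by (rule g_int[of 0 _ T]) auto
    show "set_integrable lborel {1<..<T} (\<lambda>r. 2 * KK 2 * r powr (-1))"
      by (intro set_integrable_mult_right int_powr) auto
    fix r assume r: "r \<in> {1<..<T}"
    then have "r > 0" by simp
    from g_upper_large[OF this, of 2] show "g 2 r \<le> 2 * KK 2 * r powr (-1)" by simp
  qed
  also have "\<dots> = 2 * KK 2 * (LBINT r:{1<..<T}. r powr (-1))" by (rule set_integral_mult_right)
  also have "(LBINT r:{1<..<T}. r powr (-1)) = ln T - ln 1" by (rule ftc_inv) (use T in auto)
  also have "2 * KK 2 * (ln T - ln 1) = 2 * PP * ln T" by (simp add: PP_KK)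
  also have "2 * PP * ln T = PP * ln snr" using assms by (simp add: T_def ln_sqrt)
  finally show ?thesis by simp
qed

lemma alpha2_lower: assumes "R \<ge> 1" "sqrt snr > R"
  and d0: "d0 = Ek 0 / (A0 * R^2)" and d2: "d2 = Ek 2 / (A2 * R^2)" and d01: "d0 \<le> 1" "d2 \<le> 1"
  shows "2 * PP * ((1 - d0) powr (1/2) * sqrt (1 - d2)) * (ln (sqrt snr) - ln R) \<le> alpha snr 2"
proof -
  define T where "T = sqrt snr"
  have T: "T > R" "T > 0" using assms unfolding T_def by linarith+
  have "sqrt snr > 0" using assms by linarith
  then have snr: "snr \<ge> 0" by simp
  define c where "c = (1 - d0) powr (1/2) * sqrt (1 - d2)"
  have d00: "0 \<le> d0" "0 \<le> d2" using d0 d2 A0_pos A2_pos Ek_nonneg[of 0] Ek_nonneg[of 2] by simp_all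
  have "(LBINT r:{R<..<T}. 2 * KK 2 * c * r powr (-1)) \<le> (LBINT r:{R<..<T}. g 2 r)"
  proof (rule set_integral_mono)
    show "set_integrable lborel {R<..<T} (g 2)" using assms by (intro g_int[of 0 _ T]) auto
    show "set_integrable lborel {R<..<T} (\<lambda>r. 2 * KK 2 * c * r powr (-1))"
      using assms by (intro set_integrable_mult_right int_powr) auto
    fix r assume r: "r \<in> {R<..<T}"
    then have rp: "r > 0" and rR: "r \<ge> R" using assms by auto
    have r2: "R^2 \<le> r^2" using rR assms by (intro power_mono) auto
    have z0: "zeta 0 r \<ge> A0 * (1 - d0) / r"
    proof -
      have "Ek 0 / r^2 \<le> Ek 0 / R^2" using Ek_nonneg[of 0] r2 assms rp by (intro divide_left_mono) auto
      then have "A0 * (1 - d0) \<le> A0 - Ek 0 / r^2" unfolding d0 using A0_pos by (simp add: field_simps)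
      then have "A0 * (1 - d0) / r \<le> (A0 - Ek 0 / r^2) / r" using rp by (simp add: divide_right_mono)
      then show ?thesis using zeta0_lower[OF rp] by linarith
    qed
    have z2: "zeta 2 r \<ge> A2 * (1 - d2) / r^3"
    proof -
      have "Ek 2 / r^2 \<le> Ek 2 / R^2" using Ek_nonneg[of 2] r2 assms rp by (intro divide_left_mono) auto
      then have "A2 * (1 - d2) \<le> A2 - Ek 2 / r^2" unfolding d2 using A2_pos by (simp add: field_simps)
      then have "A2 * (1 - d2) / r^3 \<le> (A2 - Ek 2 / r^2) / r^3" using rp by (simp add: divide_right_mono)
      then show ?thesis using zeta2_lower[OF rp] by linarith
    qed
    have "real 2 * KK 2 * ((1 - d0) powr ((real 2 - 1) / 2) * sqrt (1 - d2)) * r powr ((real 2 - 4) / 2) \<le> g 2 r"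
      by (rule g_lower_large[OF rp _ d00(1) d01(1) d00(2) d01(2) z0 z2]) simp
    then show "2 * KK 2 * c * r powr (-1) \<le> g 2 r" by (simp add: c_def)
  qed
  also have "\<dots> \<le> (LBINT r:{0<..<T}. g 2 r)"
    using assms by (intro set_int_subset_le g_int[of 0 _ T] g_nonneg) (auto simp: T_def)
  also have "\<dots> = alpha snr 2" using alpha_Ioo[OF snr, of 2] by (simp add: T_def)
  finally have "(LBINT r:{R<..<T}. 2 * KK 2 * c * r powr (-1)) \<le> alpha snr 2" .
  moreover have "(LBINT r:{R<..<T}. 2 * KK 2 * c * r powr (-1)) = 2 * PP * c * (ln T - ln R)"
  proof -
    have "(LBINT r:{R<..<T}. 2 * KK 2 * c * r powr (-1)) = 2 * KK 2 * c * (LBINT r:{R<..<T}. r powr (-1))"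
      by (rule set_integral_mult_right)
    also have "(LBINT r:{R<..<T}. r powr (-1)) = ln T - ln R" by (rule ftc_inv) (use T assms in auto)
    finally show ?thesis by (simp add: PP_KK)
  qed
  ultimately show ?thesis by (simp add: c_def T_def)
qed

lemma part3: "(\<lambda>snr. alpha snr 2) \<sim>[at_top] (\<lambda>snr. A0 powr (1/2) * sqrt A2 * ln snr)"
proof -
  have "((\<lambda>snr. alpha snr 2 / (PP * ln snr)) \<longlongrightarrow> 1) at_top"
  proof (rule tendstoI)
    fix e :: real assume e: "e > 0"
    define e' where "e' = min e 1"
    have e': "0 < e'" "e' \<le> e" "e' \<le> 1" using e by (auto simp: e'_def)
    have W0: "Ek 0 / A0 \<ge> 0" "Ek 2 / A2 \<ge> 0" using Ek_nonneg[of 0] Ek_nonneg[of 2] A0_pos A2_pos by simp_all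
    define W where "W = Ek 0 / A0 + Ek 2 / A2 + 1"
    have W: "W \<ge> 1" "Ek 0 / A0 \<le> W" "Ek 2 / A2 \<le> W" using W0 by (auto simp: W_def)
    define R where "R = sqrt (4 * W / e')"
    have R2: "R^2 = 4 * W / e'" using W e' by (simp add: R_def)
    have R2ge: "4 \<le> R^2" unfolding R2 using W e' by (simp add: field_simps)
    have R1: "R \<ge> 1"
    proof (rule ccontr)
      assume "\<not> R \<ge> 1"
      moreover have "R \<ge> 0" using W e' by (simp add: R_def)
      ultimately have "R^2 \<le> 1" by (simp add: power_le_one)
      then show False using R2ge by simp
    qed
    define d0 where "d0 = Ek 0 / (A0 * R^2)"
    define d2 where "d2 = Ek 2 / (A2 * R^2)"
    have d0e: "d0 = (Ek 0 / A0) * e' / (4 * W)" unfolding d0_def R2 using A0_pos W e' by (simp add: field_simps)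
    have d2e: "d2 = (Ek 2 / A2) * e' / (4 * W)" unfolding d2_def R2 using A2_pos W e' by (simp add: field_simps)
    have d0b: "0 \<le> d0" "d0 \<le> e'/4"
    proof -
      show "0 \<le> d0" unfolding d0e using W0 W e' Ek_nonneg[of 0] Ek_nonneg[of 2] A0_pos A2_pos by (intro divide_nonneg_pos mult_nonneg_nonneg) auto
      have "(Ek 0 / A0) * e' / (4 * W) \<le> W * e' / (4 * W)" using W e' by (intro divide_right_mono mult_right_mono) auto
      then show "d0 \<le> e'/4" unfolding d0e using W by simp
    qed
    have d2b: "0 \<le> d2" "d2 \<le> e'/4"
    proof -
      show "0 \<le> d2" unfolding d2e using W0 W e' Ek_nonneg[of 0] Ek_nonneg[of 2] A0_pos A2_pos by (intro divide_nonneg_pos mult_nonneg_nonneg) auto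
      have "(Ek 2 / A2) * e' / (4 * W) \<le> W * e' / (4 * W)" using W e' by (intro divide_right_mono mult_right_mono) auto
      then show "d2 \<le> e'/4" unfolding d2e using W by simp
    qed
    define c where "c = (1 - d0) powr (1/2) * sqrt (1 - d2)"
    have c_lo: "c \<ge> 1 - e'/2"
    proof -
      have a: "(1 - d0) powr (1/2) \<ge> 1 - d0"
      proof -
        have "(1 - d0) * (1 - d0) \<le> (1 - d0) * 1" using d0b e' by (intro mult_left_mono) auto
        then have "1 - d0 \<le> sqrt (1 - d0)" by (intro real_le_rsqrt) (simp add: power2_eq_square)
        then show ?thesis using d0b e' by (simp add: powr_half_sqrt)
      qed
      have b: "sqrt (1 - d2) \<ge> 1 - d2"
      proof -
        have "(1 - d2) * (1 - d2) \<le> (1 - d2) * 1" using d2b e' by (intro mult_left_mono) auto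
        then show ?thesis by (intro real_le_rsqrt) (simp add: power2_eq_square)
      qed
      have "(1 - d0) * (1 - d2) \<le> c" unfolding c_def using a b d0b d2b e' by (intro mult_mono) auto
      moreover have "(1 - d0) * (1 - d2) = 1 - d0 - d2 + d0 * d2" by (simp add: algebra_simps)
      moreover have "d0 * d2 \<ge> 0" using d0b d2b by simp
      ultimately show ?thesis using d0b d2b by linarith
    qed
    have c0: "c \<ge> 0" unfolding c_def using d2b e' by (intro mult_nonneg_nonneg) auto
    have lnR: "ln R \<ge> 0" using R1 by simp
    define Lam where "Lam = max (8 * ln R / e') (4 * \<bar>C1\<bar> / (PP * e')) + 1"
    have ev: "eventually (\<lambda>snr. R^2 < snr \<and> Lam \<le> ln snr) at_top"
      using eventually_gt_at_top[of "R^2"] ln_at_top[unfolded filterlim_at_top, rule_format, of Lam]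
      by (rule eventually_conj)
    show "eventually (\<lambda>snr. dist (alpha snr 2 / (PP * ln snr)) 1 < e) at_top"
      using ev
    proof eventually_elim
      case (elim snr)
      then have snrR: "R^2 < snr" and lam: "Lam \<le> ln snr" by auto
      have snr1: "snr > 1" using snrR R2ge by linarith
      define l where "l = ln snr"
      have Lp: "Lam \<ge> 1" unfolding Lam_def using lnR e' PP_pos by (smt (verit) divide_nonneg_pos max.cobounded1 mult_nonneg_nonneg abs_ge_zero)
      have l: "l \<ge> Lam" "l > 0" using lam Lp by (auto simp: l_def)
      have l1: "8 * ln R / e' \<le> l" and l2: "4 * \<bar>C1\<bar> / (PP * e') \<le> l" using l unfolding Lam_def by auto
      have PPl: "PP * l > 0" using PP_pos l by simp
      have sqR: "sqrt snr > R" using snrR R1 by (metis abs_of_nonneg le_less_trans real_less_rsqrt zero_le_one)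
      have up: "alpha snr 2 / (PP * l) \<le> 1 + e'/4"
      proof -
        have "alpha snr 2 \<le> C1 + PP * l" using alpha2_upper[OF snr1] by (simp add: l_def)
        then have "alpha snr 2 / (PP * l) \<le> (C1 + PP * l) / (PP * l)" using PPl by (simp add: divide_right_mono)
        also have "\<dots> = C1 / (PP * l) + 1" using PPl PP_pos l by (simp add: add_divide_distrib)
        also have "C1 / (PP * l) \<le> e'/4"
        proof -
          have "4 * \<bar>C1\<bar> \<le> l * (PP * e')" using l2 PP_pos e' by (simp add: pos_divide_le_eq)
          then have "\<bar>C1\<bar> \<le> (e'/4) * (PP * l)" by (simp add: algebra_simps)
          then have "\<bar>C1\<bar> / (PP * l) \<le> e'/4" using PPl by (simp add: pos_divide_le_eq)
          moreover have "C1 / (PP * l) \<le> \<bar>C1\<bar> / (PP * l)" using PPl by (simp add: divide_right_mono)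
          ultimately show ?thesis by linarith
        qed
        finally show ?thesis by simp
      qed
      have lo: "alpha snr 2 / (PP * l) \<ge> c * (1 - e'/4)"
      proof -
        have d01: "d0 \<le> 1" "d2 \<le> 1" using d0b d2b e' by auto
        have "2 * PP * c * (ln (sqrt snr) - ln R) \<le> alpha snr 2"
          using alpha2_lower[OF R1 sqR d0_def d2_def d01] by (simp add: c_def)
        moreover have "ln (sqrt snr) = l / 2" using snr1 by (simp add: l_def ln_sqrt)
        ultimately have A: "PP * c * (l - 2 * ln R) \<le> alpha snr 2" by (simp add: algebra_simps)
        have "2 * ln R \<le> (e'/4) * l" using l1 e' by (simp add: pos_divide_le_eq algebra_simps)
        then have "c * (1 - e'/4) * (PP * l) \<le> PP * c * (l - 2 * ln R)"
          using c0 PP_pos by (simp add: algebra_simps mult_left_mono)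
        then have "c * (1 - e'/4) * (PP * l) \<le> alpha snr 2" using A by linarith
        then show ?thesis using PPl by (simp add: pos_le_divide_eq)
      qed
      have "c * (1 - e'/4) \<ge> (1 - e'/2) * (1 - e'/4)" using c_lo e' by (intro mult_right_mono) auto
      moreover have "(1 - e'/2) * (1 - e'/4) \<ge> 1 - 3 * e' / 4" using e' by (simp add: algebra_simps)
      ultimately have "alpha snr 2 / (PP * l) \<ge> 1 - 3 * e' / 4" using lo by linarith
      then show "dist (alpha snr 2 / (PP * ln snr)) 1 < e"
        using up e' unfolding dist_real_def l_def by (simp add: abs_less_iff)
    qed
  qed
  then show ?thesis unfolding PP_def[symmetric] by (intro asymp_equivI') (simp add: mult.assoc)
qed

theorem proposition2:
  shows "(\<forall>e>0. \<exists>d>0. \<forall>nt::nat. \<forall>snr::real. nt \<ge> 1 \<and> snr > 0 \<and> real nt * snr < d \<longrightarrow>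
            \<bar>alpha snr nt / ((2 / pi * snr) powr (real nt / 2)) - 1\<bar> < e)
      \<and> ((\<lambda>snr. alpha snr 1) \<sim>[at_top] (\<lambda>snr. LBINT r:{0..}. sqrt (zeta 2 r)))
      \<and> ((\<lambda>snr. alpha snr 2) \<sim>[at_top] (\<lambda>snr. A0 powr (1/2) * sqrt A2 * ln snr))
      \<and> (\<forall>e>0. \<exists>M. \<forall>nt::nat. \<forall>snr::real. nt \<ge> 3 \<and> snr / real nt > M \<longrightarrow>
            \<bar>alpha snr nt / (2 * real nt / (real nt - 2) * A0 powr ((real nt - 1) / 2) * sqrt A2
                 * snr powr ((real nt - 2) / 4)) - 1\<bar> < e)"
    using part1 part2 part3 part4 by blast

end
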